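(* Let $m\ge1$, $1\leq p<2$, $\nu\in\{0,1,2,\dots\}$, $0\le\alpha\le1$, with $\nu+\alpha>m(1/p-1/2)$, and let $f\in C^{\nu,\alpha}(\mathbb T^m)$. Then $$\|f\|_{A_p(\mathbb T^m)}\leq c\,\|f\|_{C^{\nu,\alpha}(\mathbb T^m)}^{\tau}\,\|f\|_{L^2(\mathbb T^m)}^{1-\tau},\qquad \tau=\frac{m(1/p-1/2)}{\nu+\alpha},$$ where $c>0$ does not depend on $f$.
   Context: $\mathbb T^m=\mathbb R^m/2\pi\mathbb Z^m$. $\widehat f(k)=(2\pi)^{-m}\int_{\mathbb T^m}f(t)e^{-i(k,t)}dt$, $\|f\|_{A_p(\mathbb T^m)}=\big(\sum_{k\in\mathbb Z^m}|\widehat f(k)|^p\big)^{1/p}$. $\|f\|_{L^2(\mathbb T^m)}=\big((2\pi)^{-m}\int_{\mathbb T^m}|f|^2\big)^{1/2}$, $\|g\|_{C(\mathbb T^m)}=\sup|g|$. For $0<\alpha\le1$, $C^{\nu,\alpha}(\mathbb T^m)$ is the class of $\nu$ times differentiable functions whose partial derivatives of order $\nu$ satisfy a Lipschitz condition of order $\alpha$; $C^{\nu,0}=C^\nu$. With $D_\gamma f=\partial^{|\gamma|}f/\partial t_1^{\gamma_1}\cdots\partial t_m^{\gamma_m}$ and $\omega(g,\delta)=\sup_{|t_1-t_2|\le\delta}|g(t_1)-g(t_2)|$, the norm is $\|f\|_{C^{\nu,\alpha}(\mathbb T^m)}=\max_{0\le|\gamma|\le\nu}\|D_\gamma f\|_{C(\mathbb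 T^m)}+\max_{|\gamma|=\nu}\sup_{\delta>0}\delta^{-\alpha}\omega(D_\gamma f,\delta)$. *)

theory Defs
  imports "HOL-Analysis.Analysis"
begin

text \<open>Functions on the torus T^m are represented as functions on R^m (index type 'm)
  that are 2 pi-periodic in every coordinate.\<close>

definition torus_periodic :: "(real^'m \<Rightarrow> 'b) \<Rightarrow> bool" where
  "torus_periodic f \<longleftrightarrow> (\<forall>i t. f (t + (2*pi) *\<^sub>R axis i 1) = f t)"

definition torus_box :: "(real^'m) set" where
  "torus_box = cbox 0 (\<chi> i. 2*pi)"

definition fourier_coeff :: "(real^'m::finite \<Rightarrow> complex) \<Rightarrow> int^'m \<Rightarrow> complex" where
  "fourier_coeff f k = complex_of_real ((2*pi) powi (- int CARD('m))) *
     integral torus_box (\<lambda>t. f t * cis (- (\<Sum>i\<in>UNIV. of_int (k$i) * t$i)))"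

text \<open>A_p norm as an (extended) sum; we express finiteness separately via summable_on.\<close>
definition Ap_norm :: "real \<Rightarrow> (real^'m::finite \<Rightarrow> complex) \<Rightarrow> real" where
  "Ap_norm p f = (\<Sum>\<^sub>\<infinity>k\<in>UNIV. norm (fourier_coeff f k) powr p) powr (1/p)"

definition L2_torus_norm :: "(real^'m::finite \<Rightarrow> complex) \<Rightarrow> real" where
  "L2_torus_norm f = sqrt ((2*pi) powi (- int CARD('m)) *
     integral torus_box (\<lambda>t. (norm (f t))\<^sup>2))"

definition sup_norm :: "('a \<Rightarrow> complex) \<Rightarrow> real" where
  "sup_norm g = (SUP t. norm (g t))"

definition partial :: "'m \<Rightarrow> (real^'m \<Rightarrow> complex) \<Rightarrow> real^'m \<Rightarrow> complex" where
  "partial i g t = vector_derivative (\<lambda>s. g (t + s *\<^sub>R axis i 1)) (at 0)"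

text \<open>Iterated partial derivative along a list of directions; a multi-index gamma
  corresponds to any list in which i occurs gamma_i times.\<close>
fun Dpart :: "'m list \<Rightarrow> (real^'m \<Rightarrow> complex) \<Rightarrow> real^'m \<Rightarrow> complex" where
  "Dpart [] g = g"
| "Dpart (i # xs) g = partial i (Dpart xs g)"

definition modulus_cont :: "(real^'m \<Rightarrow> complex) \<Rightarrow> real \<Rightarrow> real" where
  "modulus_cont g \<delta> = (SUP (t1, t2)\<in>{(t1, t2). dist t1 t2 \<le> \<delta>}. norm (g t1 - g t2))"

text \<open>C^{nu,alpha}(T^m): periodic, all partial derivatives of order \<le> nu exist and are
  continuous, and those of order nu are Hoelder of order alpha (for alpha = 0 this
  condition is automatic, giving C^nu).\<close>
definition C_nu_alpha :: "nat \<Rightarrow> real \<Rightarrow> (real^'m::finite \<Rightarrow> complex) set" where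
  "C_nu_alpha \<nu> \<alpha> = {f. torus_periodic f \<and>
     (\<forall>xs::'m list. length xs < \<nu> \<longrightarrow>
        (\<forall>i t. (\<lambda>s. Dpart xs f (t + s *\<^sub>R axis i 1)) differentiable (at 0))) \<and>
     (\<forall>xs::'m list. length xs \<le> \<nu> \<longrightarrow> continuous_on UNIV (Dpart xs f)) \<and>
     (\<forall>xs::'m list. length xs = \<nu> \<longrightarrow>
        (\<exists>L. \<forall>t1 t2. norm (Dpart xs f t1 - Dpart xs f t2) \<le> L * dist t1 t2 powr \<alpha>))}"

definition C_nu_alpha_norm :: "nat \<Rightarrow> real \<Rightarrow> (real^'m::finite \<Rightarrow> complex) \<Rightarrow> real" where
  "C_nu_alpha_norm \<nu> \<alpha> f =
     Max ((\<lambda>xs. sup_norm (Dpart xs f)) ` {xs::'m list. length xs \<le> \<nu>}) +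
     Max ((\<lambda>xs. SUP \<delta>\<in>{0<..}. \<delta> powr (-\<alpha>) * modulus_cont (Dpart xs f) \<delta>)
            ` {xs::'m list. length xs = \<nu>})"

end

theory Submission
  imports Defs
begin

lemma per_minus:
  assumes "torus_periodic g"
  shows "g (t - (2*pi) *\<^sub>R axis i 1) = g t"
  using assms unfolding torus_periodic_def
  by (metis diff_add_cancel)

lemma aux_if1:
  fixes x :: "real^'m::finite"
  assumes "a \<le> b"
  shows "(\<forall>l. c \<le> x$l \<and> x$l \<le> (if l = i then a else b)) \<longleftrightarrow> (\<forall>l. c \<le> x$l \<and> x$l \<le> b) \<and> x$i \<le> a"
proof
  assume H: "\<forall>l. c \<le> x$l \<and> x$l \<le> (if l = i then a else b)"
  show "(\<forall>l. c \<le> x$l \<and> x$l \<le> b) \<and> x$i \<le> a"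
  proof (intro conjI allI)
    fix l show "c \<le> x$l" using H by blast
    show "x$l \<le> b" using H[rule_format, of l] assms by (cases "l = i") auto
  next
    show "x$i \<le> a" using H[rule_format, of i] by simp
  qed
next
  assume H: "(\<forall>l. c \<le> x$l \<and> x$l \<le> b) \<and> x$i \<le> a"
  show "\<forall>l. c \<le> x$l \<and> x$l \<le> (if l = i then a else b)"
    using H by auto
qed

lemma aux_if2:
  fixes x :: "real^'m::finite"
  assumes "c \<le> a"
  shows "(\<forall>l. (if l = i then a else c) \<le> x$l \<and> x$l \<le> b) \<longleftrightarrow> (\<forall>l. c \<le> x$l \<and> x$l \<le> b) \<and> a \<le> x$i"
proof
  assume H: "\<forall>l. (if l = i then a else c) \<le> x$l \<and> x$l \<le> b"
  show "(\<forall>l. c \<le> x$l \<and> x$l \<le> b) \<and> a \<le> x$i"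
  proof (intro conjI allI)
    fix l show "x$l \<le> b" using H by blast
    show "c \<le> x$l" using H[rule_format, of l] assms by (cases "l = i") auto
  next
    show "a \<le> x$i" using H[rule_format, of i] by simp
  qed
next
  assume H: "(\<forall>l. c \<le> x$l \<and> x$l \<le> b) \<and> a \<le> x$i"
  show "\<forall>l. (if l = i then a else c) \<le> x$l \<and> x$l \<le> b"
    using H by auto
qed

lemma box_split1:
  assumes "0 \<le> a" "a \<le> 2*pi"
  shows "torus_box \<inter> {x::real^'m::finite. x \<bullet> axis i 1 \<le> a} = cbox 0 ((\<chi> l. 2*pi) - (2*pi - a) *\<^sub>R axis i 1)"
proof (rule set_eqI)
  fix x :: "real^'m"
  have "(x \<in> cbox 0 ((\<chi> l. 2*pi) - (2*pi - a) *\<^sub>R axis i 1)) \<longleftrightarrow> (\<forall>l. 0 \<le> x$l \<and> x$l \<le> (if l = i then a else 2*pi))"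
    unfolding mem_box_cart by (simp add: axis_def if_distrib cong: if_cong)
  moreover have "x \<in> torus_box \<inter> {x. x \<bullet> axis i 1 \<le> a} \<longleftrightarrow> (\<forall>l. 0 \<le> x$l \<and> x$l \<le> 2*pi) \<and> x$i \<le> a"
    by (auto simp: torus_box_def mem_box_cart inner_axis)
  ultimately show "x \<in> torus_box \<inter> {x. x \<bullet> axis i 1 \<le> a} \<longleftrightarrow> x \<in> cbox 0 ((\<chi> l. 2*pi) - (2*pi - a) *\<^sub>R axis i 1)"
    using assms aux_if1[where a=a and b="2*pi" and c=0 and x=x and i=i] by simp
qed

lemma box_split2:
  assumes "0 \<le> a" "a \<le> 2*pi"
  shows "torus_box \<inter> {x::real^'m::finite. x \<bullet> axis i 1 \<ge> a} = cbox (a *\<^sub>R axis i 1) (\<chi> l. 2*pi)"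
proof (rule set_eqI)
  fix x :: "real^'m"
  have "(x \<in> cbox (a *\<^sub>R axis i 1) (\<chi> l. 2*pi)) \<longleftrightarrow> (\<forall>l. (if l = i then a else 0) \<le> x$l \<and> x$l \<le> 2*pi)"
    unfolding mem_box_cart by (simp add: axis_def if_distrib cong: if_cong)
  moreover have "x \<in> torus_box \<inter> {x. x \<bullet> axis i 1 \<ge> a} \<longleftrightarrow> (\<forall>l. 0 \<le> x$l \<and> x$l \<le> 2*pi) \<and> a \<le> x$i"
    by (auto simp: torus_box_def mem_box_cart inner_axis)
  ultimately show "x \<in> torus_box \<inter> {x. x \<bullet> axis i 1 \<ge> a} \<longleftrightarrow> x \<in> cbox (a *\<^sub>R axis i 1) (\<chi> l. 2*pi)"
    using assms aux_if2[where a=a and b="2*pi" and c=0 and x=x and i=i] by simp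
qed

lemma transl_cbox:
  fixes g :: "real^'m::finite \<Rightarrow> complex"
  assumes "continuous_on UNIV g"
  shows "integral (cbox (A - c) (B - c)) (\<lambda>x. g (x + c)) = integral (cbox A B) g"
proof -
  have "(g has_integral integral (cbox A B) g) (cbox A B)"
    using assms by (intro integrable_integral integrable_continuous) (auto intro: continuous_on_subset)
  from has_integral_affinity'[OF this, of 1 c] show ?thesis
    by (auto intro: integral_unique)
qed

lemma transl_inv:
  fixes g :: "real^'m::finite \<Rightarrow> complex"
  assumes cg: "continuous_on UNIV g" and pg: "torus_periodic g" and s: "0 \<le> s" "s \<le> 2*pi"
  shows "integral torus_box (\<lambda>t. g (t + s *\<^sub>R axis i 1)) = integral torus_box g"
proof -
  define e :: "real^'m" where "e = axis i 1"
  define c :: "real^'m" where "c = (\<chi> l. 2*pi)"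
  have eB: "e \<in> Basis" unfolding e_def by simp
  have cG: "continuous_on UNIV (\<lambda>t. g (t + s *\<^sub>R e))"
    by (intro continuous_on_compose2[OF cg]) (auto intro!: continuous_intros)
  have intG: "(\<lambda>t. g (t + s *\<^sub>R e)) integrable_on torus_box"
    unfolding torus_box_def by (intro integrable_continuous continuous_on_subset[OF cG]) auto
  have intg: "g integrable_on torus_box"
    unfolding torus_box_def by (intro integrable_continuous continuous_on_subset[OF cg]) auto
  have "integral torus_box (\<lambda>t. g (t + s *\<^sub>R e)) =
     integral (torus_box \<inter> {x. x \<bullet> e \<le> 2*pi - s}) (\<lambda>t. g (t + s *\<^sub>R e)) +
     integral (torus_box \<inter> {x. x \<bullet> e \<ge> 2*pi - s}) (\<lambda>t. g (t + s *\<^sub>R e))"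
    using intG eB unfolding torus_box_def by (rule integral_split)
  also have "integral (torus_box \<inter> {x. x \<bullet> e \<le> 2*pi - s}) (\<lambda>t. g (t + s *\<^sub>R e))
      = integral (cbox (s *\<^sub>R e - s *\<^sub>R e) (c - s *\<^sub>R e)) (\<lambda>t. g (t + s *\<^sub>R e))"
    using box_split1[of "2*pi - s" i] s unfolding e_def c_def by simp
  also have "\<dots> = integral (cbox (s *\<^sub>R e) c) g" by (rule transl_cbox[OF cg])
  also have "integral (torus_box \<inter> {x. x \<bullet> e \<ge> 2*pi - s}) (\<lambda>t. g (t + s *\<^sub>R e))
      = integral (cbox ((2*pi - s) *\<^sub>R e) c) (\<lambda>t. g (t + (s - 2*pi) *\<^sub>R e))"
  proof -
    have "g (t + s *\<^sub>R e) = g (t + (s - 2*pi) *\<^sub>R e)" for t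
      using per_minus[OF pg, of "t + s *\<^sub>R e" i] unfolding e_def
      by (simp add: algebra_simps)
    then show ?thesis
      using box_split2[of "2*pi - s" i] s unfolding e_def c_def by simp
  qed
  also have "\<dots> = integral (cbox (0 - (s - 2*pi) *\<^sub>R e) ((c - (2*pi - s) *\<^sub>R e) - (s - 2*pi) *\<^sub>R e)) (\<lambda>t. g (t + (s - 2*pi) *\<^sub>R e))"
    by (simp add: algebra_simps)
  also have "\<dots> = integral (cbox 0 (c - (2*pi - s) *\<^sub>R e)) g" by (rule transl_cbox[OF cg])
  finally have "integral torus_box (\<lambda>t. g (t + s *\<^sub>R e)) =
     integral (torus_box \<inter> {x. x \<bullet> e \<ge> s}) g + integral (torus_box \<inter> {x. x \<bullet> e \<le> s}) g"
    using box_split1[of s i] box_split2[of s i] s unfolding e_def c_def by simp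
  also have "\<dots> = integral torus_box g"
    using integral_split[OF intg[unfolded torus_box_def] eB, of s] unfolding torus_box_def by simp
  finally show ?thesis unfolding e_def .
qed

definition ph :: "int^'m::finite \<Rightarrow> real^'m \<Rightarrow> real" where
  "ph k t = (\<Sum>i\<in>UNIV. of_int (k$i) * t$i)"

lemma fc_def': "fourier_coeff f k = complex_of_real ((2*pi) powi (- int CARD('m))) *
     integral torus_box (\<lambda>t. f t * cis (- ph k t))" for f :: "real^'m::finite \<Rightarrow> complex"
  unfolding fourier_coeff_def ph_def ..

lemma ph_shift: "ph k (t + s *\<^sub>R axis i 1) = ph k t + of_int (k$i) * s"
proof -
  have "ph k (t + s *\<^sub>R axis i 1) = (\<Sum>l\<in>UNIV. of_int (k$l) * t$l + (if l = i then of_int (k$i) * s else 0))"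
    unfolding ph_def by (intro sum.cong) (auto simp: axis_def algebra_simps)
  also have "\<dots> = ph k t + of_int (k$i) * s"
    unfolding ph_def by (simp add: sum.distrib)
  finally show ?thesis .
qed

lemma ph_cont: "continuous_on UNIV (ph k)"
  unfolding ph_def by (intro continuous_intros)

lemma cis_ph_periodic: "torus_periodic (\<lambda>t. cis (c * ph k t))" if "c = 1 \<or> c = -1"
  unfolding torus_periodic_def
proof (intro allI)
  fix i t
  have "cis (c * ph k (t + (2 * pi) *\<^sub>R axis i 1)) = cis (c * ph k t + 2*pi * (c * of_int (k$i)))"
    unfolding ph_shift by (simp add: distrib_left mult.commute mult.left_commute)
  also have "\<dots> = cis (c * ph k t) * cis (2*pi * (c * of_int (k$i)))"
    by (simp only: cis_mult)
  also have "cis (2*pi * (c * of_int (k$i))) = 1"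
    using that by (intro cis_multiple_2pi) auto
  finally show "cis (c * ph k (t + (2 * pi) *\<^sub>R axis i 1)) = cis (c * ph k t)" by simp
qed

lemma cont_cis_ph: "continuous_on UNIV (\<lambda>t. cis (c * ph k t))"
  by (intro continuous_intros ph_cont)

lemma periodic_mult: "torus_periodic f \<Longrightarrow> torus_periodic g \<Longrightarrow> torus_periodic (\<lambda>t. f t * g t)"
  unfolding torus_periodic_def by simp

lemma periodic_diff: "torus_periodic f \<Longrightarrow> torus_periodic g \<Longrightarrow> torus_periodic (\<lambda>t. f t - g t)"
  unfolding torus_periodic_def by simp

lemma periodic_shift: "torus_periodic f \<Longrightarrow> torus_periodic (\<lambda>t. f (t + h))"
  unfolding torus_periodic_def
proof (intro allI)
  fix i t assume "\<forall>i t. f (t + (2 * pi) *\<^sub>R axis i 1) = f t"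
  then have "f ((t + h) + (2 * pi) *\<^sub>R axis i 1) = f (t + h)" by blast
  then show "f (t + (2 * pi) *\<^sub>R axis i 1 + h) = f (t + h)" by (simp add: ac_simps)
qed

lemma integrable_box: "continuous_on UNIV g \<Longrightarrow> (g :: real^'m::finite \<Rightarrow> 'b::banach) integrable_on torus_box"
  unfolding torus_box_def by (rule integrable_continuous, rule continuous_on_subset[of UNIV]) auto

lemma cis_aux: "cis a * cis (-1 * (p + a)) = cis (- p)"
proof -
  have "cis a * cis (-1 * (p + a)) = cis (a + -1 * (p + a))" by (simp only: cis_mult)
  also have "a + -1 * (p + a) = - p" by simp
  finally show ?thesis .
qed

lemma fc_transl:
  fixes g :: "real^'m::finite \<Rightarrow> complex"
  assumes cg: "continuous_on UNIV g" and pg: "torus_periodic g" and s: "0 \<le> s" "s \<le> 2*pi"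
  shows "fourier_coeff (\<lambda>t. g (t + s *\<^sub>R axis i 1)) k = cis (of_int (k$i) * s) * fourier_coeff g k"
proof -
  define G where "G t = g t * cis (-1 * ph k t)" for t
  have cG: "continuous_on UNIV G" unfolding G_def by (intro continuous_intros cg ph_cont)
  have pG: "torus_periodic G" unfolding G_def by (intro periodic_mult pg cis_ph_periodic) simp
  have eq: "g (t + s *\<^sub>R axis i 1) * cis (- ph k t) = cis (of_int (k$i) * s) * G (t + s *\<^sub>R axis i 1)" for t
    unfolding G_def ph_shift using cis_aux[of "of_int (k$i) * s" "ph k t"] by (simp add: ac_simps)
  have "integral torus_box (\<lambda>t. g (t + s *\<^sub>R axis i 1) * cis (- ph k t)) =
        cis (of_int (k$i) * s) * integral torus_box (\<lambda>t. G (t + s *\<^sub>R axis i 1))"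
    unfolding eq by simp
  also have "\<dots> = cis (of_int (k$i) * s) * integral torus_box G"
    using transl_inv[OF cG pG s] by simp
  finally show ?thesis unfolding fc_def' G_def by simp
qed

definition WW :: "'m::finite itself \<Rightarrow> real" where "WW _ = (2*pi) ^ CARD('m)"

lemma content_box: "Henstock_Kurzweil_Integration.content (torus_box :: (real^'m::finite) set) = WW TYPE('m)"
proof -
  have "torus_box \<noteq> ({} :: (real^'m) set)"
  proof -
    have "(0::real^'m) \<in> torus_box" unfolding torus_box_def by (simp add: mem_box_cart)
    then show ?thesis by blast
  qed
  then show ?thesis unfolding torus_box_def WW_def by (simp add: content_cbox_cart)
qed

lemma WW_pos: "WW TYPE('m::finite) > 0" unfolding WW_def by simp

lemma integral_cis_ph:
  "integral (torus_box :: (real^'m::finite) set) (\<lambda>t. cis (ph d t)) = (if d = 0 then complex_of_real (WW TYPE('m)) else 0)"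
proof (cases "d = 0")
  case True
  then have "ph d = (\<lambda>t. 0)" unfolding ph_def by auto
  then show ?thesis using True content_box unfolding torus_box_def by (simp add: scaleR_conv_of_real)
next
  case False
  then obtain i where di: "d$i \<noteq> 0" by (metis vec_eq_iff zero_index)
  define s where "s = pi / \<bar>of_int (d$i)\<bar>"
  have s1: "\<bar>of_int (d$i)\<bar> \<ge> (1::real)" using di by linarith
  have s0: "0 \<le> s" "s \<le> 2*pi"
  proof -
    have "pi / \<bar>of_int (d$i)\<bar> \<le> pi" using s1 pi_gt_zero by (simp add: divide_le_eq)
    then show "s \<le> 2*pi" unfolding s_def using pi_gt_zero by linarith
    show "0 \<le> s" unfolding s_def by simp
  qed
  have "cis (of_int (d$i) * s) = -1"
  proof (cases "d$i > 0")
    case True then show ?thesis unfolding s_def by simp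
  next
    case False then have "of_int (d$i) * s = - pi" unfolding s_def using di by simp
    then show ?thesis by (simp add: complex_eq_iff)
  qed
  have I: "integral torus_box (\<lambda>t. cis (1 * ph d (t + s *\<^sub>R axis i 1))) = integral torus_box (\<lambda>t. cis (1 * ph d t))"
    using transl_inv[OF cont_cis_ph cis_ph_periodic[of 1] s0, of d i] by simp
  have "integral torus_box (\<lambda>t. cis (1 * ph d (t + s *\<^sub>R axis i 1))) = cis (of_int (d$i) * s) * integral torus_box (\<lambda>t. cis (ph d t))"
  proof -
    have "cis (1 * ph d (t + s *\<^sub>R axis i 1)) = cis (of_int (d$i) * s) * cis (ph d t)" for t
      unfolding ph_shift by (simp add: cis_mult add.commute)
    then show ?thesis by simp
  qed
  with I \<open>cis (of_int (d$i) * s) = -1\<close> have "integral torus_box (\<lambda>t. cis (ph d t)) = 0" by simp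
  then show ?thesis using False by simp
qed

lemma powi_W: "(2*pi) powi (- int CARD('m::finite)) = 1 / WW TYPE('m)"
  unfolding WW_def by (simp add: power_int_minus power_int_of_nat divide_inverse)

lemma integral_of_real':
  assumes "f integrable_on S"
  shows "integral S (\<lambda>x. complex_of_real (f x)) = complex_of_real (integral S f)"
  using has_integral_of_real[OF integrable_integral[OF assms]] by (rule integral_unique)

lemma ph_diff: "ph (k - l) t = ph k t - ph l t"
  unfolding ph_def by (simp add: sum_subtractf algebra_simps)

lemma int_fc: "integral torus_box (\<lambda>t. g t * cis (- ph k t)) = complex_of_real (WW TYPE('m)) * fourier_coeff g k"
  for g :: "real^'m::finite \<Rightarrow> complex"
  unfolding fc_def' powi_W using WW_pos[where 'm='m] by simp

lemma cnj_sq: "z * cnj z = (complex_of_real (cmod z))\<^sup>2"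
  using complex_norm_square[of z] by simp

lemma bessel:
  fixes g :: "real^'m::finite \<Rightarrow> complex"
  assumes cg: "continuous_on UNIV g" and K: "finite K"
  shows "WW TYPE('m) * (\<Sum>k\<in>K. (cmod (fourier_coeff g k))\<^sup>2) \<le> integral torus_box (\<lambda>t. (cmod (g t))\<^sup>2)"
proof -
  define W where "W = WW TYPE('m)"
  define c where "c = fourier_coeff g"
  define P where "P t = (\<Sum>k\<in>K. c k * cis (ph k t))" for t
  define S where "S = (\<Sum>k\<in>K. (cmod (c k))\<^sup>2)"
  have W0: "W > 0" unfolding W_def by (rule WW_pos)
  have cP: "continuous_on UNIV P" unfolding P_def by (intro continuous_intros ph_cont)
  have ce: "continuous_on UNIV (\<lambda>t. cis (x * ph k t))" for x k by (intro continuous_intros ph_cont)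
  note ib = integrable_box
  have A1: "integral torus_box (\<lambda>t. g t * cnj (P t)) = of_real W * of_real S"
  proof -
    have "integral torus_box (\<lambda>t. g t * cnj (P t)) = integral torus_box (\<lambda>t. \<Sum>k\<in>K. cnj (c k) * (g t * cis (- ph k t)))"
      unfolding P_def by (simp add: cnj_sum sum_distrib_left cis_cnj ac_simps)
    also have "\<dots> = (\<Sum>k\<in>K. cnj (c k) * integral torus_box (\<lambda>t. g t * cis (- ph k t)))"
      using K by (subst integral_sum) (auto intro!: ib continuous_intros cg ph_cont)
    also have "\<dots> = (\<Sum>k\<in>K. of_real W * of_real ((cmod (c k))\<^sup>2))"
      unfolding int_fc c_def W_def by (intro sum.cong refl) (simp add: cnj_sq ac_simps)
    finally show ?thesis unfolding S_def by (simp add: sum_distrib_left)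
  qed
  have A2: "integral torus_box (\<lambda>t. P t * cnj (g t)) = of_real W * of_real S"
  proof -
    have "integral torus_box (\<lambda>t. P t * cnj (g t)) = cnj (integral torus_box (\<lambda>t. g t * cnj (P t)))"
      by (simp add: integral_cnj mult.commute)
    then show ?thesis using A1 by simp
  qed
  have A3: "integral torus_box (\<lambda>t. P t * cnj (P t)) = of_real W * of_real S"
  proof -
    have "integral torus_box (\<lambda>t. P t * cnj (P t)) = integral torus_box (\<lambda>t. \<Sum>k\<in>K. \<Sum>l\<in>K. (c k * cnj (c l)) * cis (1 * ph (k - l) t))"
    proof (rule integral_cong)
      fix t
      have cP: "cnj (P t) = (\<Sum>l\<in>K. cnj (c l) * cis (- ph l t))" by (simp add: P_def cnj_sum cis_cnj)
      have ci: "cis (ph k t) * cis (- ph l t) = cis (1 * ph (k - l) t)" for k l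
        by (simp add: cis_mult ph_diff)
      have "P t * cnj (P t) = (\<Sum>k\<in>K. \<Sum>l\<in>K. (c k * cis (ph k t)) * (cnj (c l) * cis (- ph l t)))"
        unfolding cP by (simp add: P_def sum_product)
      also have "\<dots> = (\<Sum>k\<in>K. \<Sum>l\<in>K. (c k * cnj (c l)) * (cis (ph k t) * cis (- ph l t)))"
        by (simp add: ac_simps)
      finally show "P t * cnj (P t) = (\<Sum>k\<in>K. \<Sum>l\<in>K. (c k * cnj (c l)) * cis (1 * ph (k - l) t))"
        by (simp only: ci)
    qed
    also have "\<dots> = (\<Sum>k\<in>K. \<Sum>l\<in>K. (c k * cnj (c l)) * integral torus_box (\<lambda>t. cis (ph (k - l) t)))"
      using K by (subst integral_sum, auto intro!: ib continuous_intros ph_cont integrable_sum)+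
    also have "\<dots> = (\<Sum>k\<in>K. \<Sum>l\<in>K. if k = l then (c k * cnj (c l)) * of_real W else 0)"
      unfolding integral_cis_ph W_def by (intro sum.cong refl) auto
    also have "\<dots> = (\<Sum>k\<in>K. of_real W * of_real ((cmod (c k))\<^sup>2))"
      using K by (simp add: cnj_sq ac_simps)
    finally show ?thesis unfolding S_def by (simp add: sum_distrib_left)
  qed
  have eq: "(\<lambda>t. complex_of_real ((cmod (g t - P t))\<^sup>2)) =
     (\<lambda>t. g t * cnj (g t) - g t * cnj (P t) - P t * cnj (g t) + P t * cnj (P t))"
  proof
    fix t show "complex_of_real ((cmod (g t - P t))\<^sup>2) = g t * cnj (g t) - g t * cnj (P t) - P t * cnj (g t) + P t * cnj (P t)"
      unfolding complex_norm_square by (simp add: algebra_simps)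
  qed
  have ir1: "(\<lambda>t. (cmod (g t - P t))\<^sup>2) integrable_on torus_box" by (intro ib continuous_intros cg cP)
  have ir2: "(\<lambda>t. (cmod (g t))\<^sup>2) integrable_on torus_box" by (intro ib continuous_intros cg)
  have "complex_of_real (integral torus_box (\<lambda>t. (cmod (g t - P t))\<^sup>2)) =
     integral torus_box (\<lambda>t. complex_of_real ((cmod (g t - P t))\<^sup>2))"
    by (rule integral_of_real'[OF ir1, symmetric])
  also have "\<dots> = integral torus_box (\<lambda>t. g t * cnj (g t) - g t * cnj (P t) - P t * cnj (g t) + P t * cnj (P t))"
    by (simp only: eq)
  also have "\<dots> = integral torus_box (\<lambda>t. g t * cnj (g t)) - of_real W * of_real S"
  proof -
    have i1: "(\<lambda>t. g t * cnj (g t)) integrable_on torus_box" by (intro ib continuous_intros cg)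
    have i2: "(\<lambda>t. g t * cnj (P t)) integrable_on torus_box" by (intro ib continuous_intros cg cP)
    have i3: "(\<lambda>t. P t * cnj (g t)) integrable_on torus_box" by (intro ib continuous_intros cg cP)
    have i4: "(\<lambda>t. P t * cnj (P t)) integrable_on torus_box" by (intro ib continuous_intros cg cP)
    have "integral torus_box (\<lambda>t. g t * cnj (g t) - g t * cnj (P t) - P t * cnj (g t) + P t * cnj (P t))
      = integral torus_box (\<lambda>t. g t * cnj (g t) - g t * cnj (P t) - P t * cnj (g t)) + integral torus_box (\<lambda>t. P t * cnj (P t))"
      by (intro integral_add integrable_diff i1 i2 i3 i4)
    also have "integral torus_box (\<lambda>t. g t * cnj (g t) - g t * cnj (P t) - P t * cnj (g t))
      = integral torus_box (\<lambda>t. g t * cnj (g t) - g t * cnj (P t)) - integral torus_box (\<lambda>t. P t * cnj (g t))"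
      by (intro integral_diff integrable_diff i1 i2 i3 i4)
    also have "integral torus_box (\<lambda>t. g t * cnj (g t) - g t * cnj (P t))
      = integral torus_box (\<lambda>t. g t * cnj (g t)) - integral torus_box (\<lambda>t. g t * cnj (P t))"
      by (intro integral_diff i1 i2)
    finally show ?thesis by (simp add: A1 A2 A3)
  qed
  also have "integral torus_box (\<lambda>t. g t * cnj (g t)) = complex_of_real (integral torus_box (\<lambda>t. (cmod (g t))\<^sup>2))"
    by (simp only: integral_of_real'[OF ir2] complex_norm_square[symmetric])
  finally have "complex_of_real (integral torus_box (\<lambda>t. (cmod (g t - P t))\<^sup>2)) = complex_of_real (integral torus_box (\<lambda>t. (cmod (g t))\<^sup>2) - W * S)"
    by simp
  then have "integral torus_box (\<lambda>t. (cmod (g t - P t))\<^sup>2) = integral torus_box (\<lambda>t. (cmod (g t))\<^sup>2) - W * S"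
    by (simp only: of_real_eq_iff)
  moreover have "0 \<le> integral torus_box (\<lambda>t. (cmod (g t - P t))\<^sup>2)"
    by (intro integral_nonneg ib continuous_intros cg cP) auto
  ultimately show ?thesis unfolding W_def S_def c_def by simp
qed

lemma sq_int_bound:
  fixes g :: "real^'m::finite \<Rightarrow> complex"
  assumes cg: "continuous_on UNIV g" and M: "\<And>t. cmod (g t) \<le> M"
  shows "integral torus_box (\<lambda>t. (cmod (g t))\<^sup>2) \<le> WW TYPE('m) * M\<^sup>2"
proof -
  have "integral torus_box (\<lambda>t. (cmod (g t))\<^sup>2) \<le> integral (torus_box :: (real^'m) set) (\<lambda>t. M\<^sup>2)"
  proof (rule Henstock_Kurzweil_Integration.integral_le)
    show "(\<lambda>t. (cmod (g t))\<^sup>2) integrable_on torus_box" by (intro integrable_box continuous_intros cg)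
    show "(\<lambda>t. M\<^sup>2) integrable_on (torus_box :: (real^'m) set)" by (intro integrable_box continuous_intros)
    show "(cmod (g t))\<^sup>2 \<le> M\<^sup>2" for t using M[of t] by (intro power_mono) auto
  qed
  also have "\<dots> = WW TYPE('m) * M\<^sup>2" using content_box[where 'm='m] unfolding torus_box_def by simp
  finally show ?thesis .
qed

lemma coeff_sq_bound:
  fixes g :: "real^'m::finite \<Rightarrow> complex"
  assumes cg: "continuous_on UNIV g" and M: "\<And>t. cmod (g t) \<le> M" and K: "finite K"
  shows "(\<Sum>k\<in>K. (cmod (fourier_coeff g k))\<^sup>2) \<le> M\<^sup>2"
proof -
  have "WW TYPE('m) * (\<Sum>k\<in>K. (cmod (fourier_coeff g k))\<^sup>2) \<le> WW TYPE('m) * M\<^sup>2"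
    using bessel[OF cg K] sq_int_bound[OF cg M] by linarith
  then show ?thesis using WW_pos[where 'm='m] by simp
qed

lemma coeff_L2_bound:
  fixes g :: "real^'m::finite \<Rightarrow> complex"
  assumes cg: "continuous_on UNIV g" and K: "finite K"
  shows "(\<Sum>k\<in>K. (cmod (fourier_coeff g k))\<^sup>2) \<le> (L2_torus_norm g)\<^sup>2"
proof -
  have W: "WW TYPE('m) > 0" by (rule WW_pos)
  have nn: "0 \<le> integral torus_box (\<lambda>t. (cmod (g t))\<^sup>2)"
    by (intro integral_nonneg integrable_box continuous_intros cg) auto
  have "(L2_torus_norm g)\<^sup>2 = integral torus_box (\<lambda>t. (cmod (g t))\<^sup>2) / WW TYPE('m)"
    unfolding L2_torus_norm_def powi_W using nn W by simp
  then have "WW TYPE('m) * (\<Sum>k\<in>K. (cmod (fourier_coeff g k))\<^sup>2) \<le> WW TYPE('m) * (L2_torus_norm g)\<^sup>2"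
    using bessel[OF cg K] W by simp
  then show ?thesis using W by simp
qed

lemma fc_diff:
  fixes u v :: "real^'m::finite \<Rightarrow> complex"
  assumes "continuous_on UNIV u" "continuous_on UNIV v"
  shows "fourier_coeff (\<lambda>t. u t - v t) k = fourier_coeff u k - fourier_coeff v k"
proof -
  have "integral torus_box (\<lambda>t. (u t - v t) * cis (- ph k t)) =
     integral torus_box (\<lambda>t. u t * cis (- ph k t)) - integral torus_box (\<lambda>t. v t * cis (- ph k t))"
    unfolding ring_distribs by (intro integral_diff integrable_box continuous_intros assms ph_cont)
  then show ?thesis unfolding fc_def' by (simp add: ring_distribs)
qed

fun Dn :: "real^'m \<Rightarrow> nat \<Rightarrow> (real^'m \<Rightarrow> complex) \<Rightarrow> real^'m \<Rightarrow> complex" where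
  "Dn h 0 g = g"
| "Dn h (Suc n) g = Dn h n (\<lambda>t. g (t + h) - g t)"

lemma Dn_cont: "continuous_on UNIV g \<Longrightarrow> continuous_on UNIV (Dn h n g)"
proof (induction n arbitrary: g)
  case 0 then show ?case by simp
next
  case (Suc n)
  have "continuous_on UNIV (\<lambda>t. g (t + h) - g t)"
    by (intro continuous_intros continuous_on_compose2[OF Suc.prems]) auto
  then show ?case using Suc.IH by simp
qed

lemma Dn_per: "torus_periodic g \<Longrightarrow> torus_periodic (Dn h n g)"
proof (induction n arbitrary: g)
  case 0 then show ?case by simp
next
  case (Suc n)
  have "torus_periodic (\<lambda>t. g (t + h) - g t)"
    by (intro periodic_diff periodic_shift Suc.prems)
  then show ?case using Suc.IH by simp
qed

lemma fc_Dn: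
  fixes g :: "real^'m::finite \<Rightarrow> complex"
  assumes "continuous_on UNIV g" "torus_periodic g" "0 \<le> s" "s \<le> 2*pi"
  shows "fourier_coeff (Dn (s *\<^sub>R axis i 1) n g) k = (cis (of_int (k$i) * s) - 1) ^ n * fourier_coeff g k"
  using assms(1,2)
proof (induction n arbitrary: g)
  case 0 then show ?case by simp
next
  case (Suc n)
  have c: "continuous_on UNIV (\<lambda>t. g (t + s *\<^sub>R axis i 1))"
    by (intro continuous_on_compose2[OF Suc.prems(1)] continuous_intros) auto
  have "continuous_on UNIV (\<lambda>t. g (t + s *\<^sub>R axis i 1) - g t)"
    by (intro continuous_intros c Suc.prems)
  moreover have "torus_periodic (\<lambda>t. g (t + s *\<^sub>R axis i 1) - g t)"
    by (intro periodic_diff periodic_shift Suc.prems)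
  ultimately have "fourier_coeff (Dn (s *\<^sub>R axis i 1) (Suc n) g) k =
      (cis (of_int (k$i) * s) - 1) ^ n * fourier_coeff (\<lambda>t. g (t + s *\<^sub>R axis i 1) - g t) k"
    using Suc.IH by simp
  also have "fourier_coeff (\<lambda>t. g (t + s *\<^sub>R axis i 1) - g t) k = (cis (of_int (k$i) * s) - 1) * fourier_coeff g k"
    unfolding fc_diff[OF c Suc.prems(1)] fc_transl[OF Suc.prems assms(3,4)] by (simp add: algebra_simps)
  finally show ?case by (simp add: ac_simps)
qed

fun Dl :: "real \<Rightarrow> nat \<Rightarrow> (real \<Rightarrow> 'a::ab_group_add) \<Rightarrow> real \<Rightarrow> 'a" where
  "Dl s 0 u = u"
| "Dl s (Suc n) u = Dl s n (\<lambda>y. u (y + s) - u y)"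

lemma Dn_Dl: "Dn (s *\<^sub>R axis i 1) n g t = Dl s n (\<lambda>x. g (t + x *\<^sub>R axis i 1)) 0"
proof (induction n arbitrary: g)
  case 0 then show ?case by simp
next
  case (Suc n)
  have "(\<lambda>x. g (t + x *\<^sub>R axis i 1 + s *\<^sub>R axis i 1) - g (t + x *\<^sub>R axis i 1)) =
        (\<lambda>y. g (t + (y + s) *\<^sub>R axis i 1) - g (t + y *\<^sub>R axis i 1))"
    by (simp add: scaleR_add_left add.assoc)
  then show ?case using Suc.IH by simp
qed

lemma Dl_Re: "Re (Dl s n u x) = Dl s n (\<lambda>y. Re (u y)) x"
  by (induction n arbitrary: u) auto

lemma Dl_Im: "Im (Dl s n u x) = Dl s n (\<lambda>y. Im (u y)) x"
  by (induction n arbitrary: u) auto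

lemma Dl_mvt:
  fixes u :: "nat \<Rightarrow> real \<Rightarrow> real"
  assumes "\<And>k y. k < n \<Longrightarrow> (u k has_real_derivative u (Suc k) y) (at y)" and "s > 0"
  shows "\<exists>\<xi>. x \<le> \<xi> \<and> \<xi> \<le> x + real n * s \<and> Dl s n (u 0) x = s ^ n * u n \<xi>"
  using assms(1)
proof (induction n arbitrary: u x)
  case 0 then show ?case by auto
next
  case (Suc n)
  define v where "v k y = u k (y + s) - u k y" for k y
  have dv: "(v k has_real_derivative v (Suc k) y) (at y)" if "k < n" for k y
  proof -
    have "(u k has_real_derivative u (Suc k) (y + s)) (at (y + s))" using Suc.prems that by simp
    then have "((\<lambda>y. u k (y + s)) has_real_derivative u (Suc k) (y + s)) (at y)"
      by (simp add: DERIV_shift)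
    then show ?thesis unfolding v_def using Suc.prems that
      by (intro derivative_intros) auto
  qed
  obtain \<xi> where xi: "x \<le> \<xi>" "\<xi> \<le> x + real n * s" "Dl s n (v 0) x = s ^ n * v n \<xi>"
    using Suc.IH[where u=v and x=x] dv by blast
  have "\<forall>y. \<xi> \<le> y \<and> y \<le> \<xi> + s \<longrightarrow> (u n has_real_derivative u (Suc n) y) (at y)"
    using Suc.prems by simp
  then obtain z where z: "\<xi> < z" "z < \<xi> + s" "u n (\<xi> + s) - u n \<xi> = (\<xi> + s - \<xi>) * u (Suc n) z"
    using MVT2[of \<xi> "\<xi> + s" "u n" "u (Suc n)"] \<open>s > 0\<close> by auto
  have "Dl s (Suc n) (u 0) x = Dl s n (v 0) x" unfolding v_def by simp
  also have "\<dots> = s ^ Suc n * u (Suc n) z" using xi(3) z(3) unfolding v_def by simp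
  finally show ?case using xi z by (intro exI[of _ z]) (auto simp: algebra_simps)
qed

lemma Dl_Suc': "Dl s (Suc n) u x = Dl s n u (x + s) - Dl s n u x"
proof (induction n arbitrary: u x)
  case 0 then show ?case by simp
next
  case (Suc n)
  have "Dl s (Suc (Suc n)) u x = Dl s (Suc n) (\<lambda>y. u (y + s) - u y) x" by simp
  also have "\<dots> = Dl s n (\<lambda>y. u (y + s) - u y) (x + s) - Dl s n (\<lambda>y. u (y + s) - u y) x" by (rule Suc.IH)
  finally show ?case by simp
qed


lemma Re_bound:
  fixes f :: "real^'m::finite \<Rightarrow> complex"
  assumes f: "f \<in> C_nu_alpha \<nu> \<alpha>" and a: "0 \<le> \<alpha>" and s: "s > 0"
    and H: "\<And>t1 t2. cmod (Dpart (replicate \<nu> i) f t1 - Dpart (replicate \<nu> i) f t2) \<le> H * dist t1 t2 powr \<alpha>"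
  shows "\<bar>Re (Dn (s *\<^sub>R axis i 1) (Suc \<nu>) f t)\<bar> \<le> s ^ \<nu> * (H * (real (Suc \<nu>) * s) powr \<alpha>)"
proof -
  define e :: "real^'m" where "e = axis i 1"
  define u where "u k x = Re (Dpart (replicate k i) f (t + x *\<^sub>R e))" for k x
  have der: "(u k has_real_derivative u (Suc k) y) (at y)" if "k < \<nu>" for k y
  proof -
    define t' where "t' = t + y *\<^sub>R e"
    have "(\<lambda>\<sigma>. Dpart (replicate k i) f (t' + \<sigma> *\<^sub>R axis i 1)) differentiable (at 0)"
      using f that unfolding C_nu_alpha_def by auto
    from vector_derivative_works[THEN iffD1, OF this]
    have "((\<lambda>\<sigma>. Dpart (replicate k i) f (t' + \<sigma> *\<^sub>R e)) has_vector_derivative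
           Dpart (replicate (Suc k) i) f t') (at 0)"
      unfolding e_def by (simp add: partial_def)
    then have "((\<lambda>\<sigma>. Re (Dpart (replicate k i) f (t' + \<sigma> *\<^sub>R e))) has_real_derivative
           Re (Dpart (replicate (Suc k) i) f t')) (at 0)"
      by (rule has_field_derivative_Re)
    moreover have "(\<lambda>\<sigma>. Re (Dpart (replicate k i) f (t' + \<sigma> *\<^sub>R e))) = (\<lambda>\<sigma>. u k (\<sigma> + y))"
      unfolding u_def t'_def by (simp add: scaleR_add_left ac_simps)
    ultimately have "((\<lambda>\<sigma>. u k (\<sigma> + y)) has_real_derivative u (Suc k) y) (at 0)"
      unfolding u_def t'_def by simp
    then show ?thesis using DERIV_shift[of "u k" "u (Suc k) y" 0 y] by simp
  qed
  have u0: "u 0 = (\<lambda>x. Re (f (t + x *\<^sub>R e)))" unfolding u_def by simp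
  have "Re (Dn (s *\<^sub>R axis i 1) (Suc \<nu>) f t) = Dl s (Suc \<nu>) (u 0) 0"
    unfolding Dn_Dl Dl_Re u0 e_def ..
  also have "\<dots> = Dl s \<nu> (u 0) s - Dl s \<nu> (u 0) 0" using Dl_Suc'[of s \<nu> "u 0" 0] by simp
  finally have eq: "Re (Dn (s *\<^sub>R axis i 1) (Suc \<nu>) f t) = Dl s \<nu> (u 0) s - Dl s \<nu> (u 0) 0" .
  obtain x1 where x1: "s \<le> x1" "x1 \<le> s + real \<nu> * s" "Dl s \<nu> (u 0) s = s ^ \<nu> * u \<nu> x1"
    using Dl_mvt[of \<nu> u s s] der s by blast
  obtain x2 where x2: "0 \<le> x2" "x2 \<le> 0 + real \<nu> * s" "Dl s \<nu> (u 0) 0 = s ^ \<nu> * u \<nu> x2"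
    using Dl_mvt[of \<nu> u s 0] der s by blast
  have d: "\<bar>x1 - x2\<bar> \<le> real (Suc \<nu>) * s" using x1 x2 s by (auto simp: algebra_simps)
  have dist: "dist (t + x1 *\<^sub>R e) (t + x2 *\<^sub>R e) = \<bar>x1 - x2\<bar>"
    unfolding e_def dist_norm by (simp add: scaleR_diff_left[symmetric])
  have "\<bar>u \<nu> x1 - u \<nu> x2\<bar> \<le> cmod (Dpart (replicate \<nu> i) f (t + x1 *\<^sub>R e) - Dpart (replicate \<nu> i) f (t + x2 *\<^sub>R e))"
    unfolding u_def using abs_Re_le_cmod[of "Dpart (replicate \<nu> i) f (t + x1 *\<^sub>R e) - Dpart (replicate \<nu> i) f (t + x2 *\<^sub>R e)"] by simp
  also have "\<dots> \<le> H * \<bar>x1 - x2\<bar> powr \<alpha>" using H[of "t + x1 *\<^sub>R e" "t + x2 *\<^sub>R e"] unfolding dist .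
  also have "\<dots> \<le> H * (real (Suc \<nu>) * s) powr \<alpha>"
  proof -
    have "H * \<bar>x1 - x2\<bar> powr \<alpha> \<ge> 0 \<or> True" by simp
    show ?thesis
    proof (cases "H \<ge> 0")
      case True then show ?thesis using d a by (intro mult_left_mono powr_mono2) auto
    next
      case False
      have h1: "cmod (Dpart (replicate \<nu> i) f t - Dpart (replicate \<nu> i) f (t + e)) \<le> H * dist t (t + e) powr \<alpha>" by (rule H)
      have "dist t (t + e) = 1" unfolding e_def dist_norm by simp
      then have h2: "cmod (Dpart (replicate \<nu> i) f t - Dpart (replicate \<nu> i) f (t + e)) \<le> H" using h1 by simp
      have "0 \<le> H" using norm_ge_zero h2 by (rule order_trans)
      then have False using False by simp
      then show ?thesis ..
    qed
  qed
  finally have b: "\<bar>u \<nu> x1 - u \<nu> x2\<bar> \<le> H * (real (Suc \<nu>) * s) powr \<alpha>" .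
  have "\<bar>Re (Dn (s *\<^sub>R axis i 1) (Suc \<nu>) f t)\<bar> = s ^ \<nu> * \<bar>u \<nu> x1 - u \<nu> x2\<bar>"
    unfolding eq x1(3) x2(3) using s by (simp add: abs_mult right_diff_distrib[symmetric])
  also have "\<dots> \<le> s ^ \<nu> * (H * (real (Suc \<nu>) * s) powr \<alpha>)"
    using b s by (intro mult_left_mono) auto
  finally show ?thesis .
qed

lemma Im_bound:
  fixes f :: "real^'m::finite \<Rightarrow> complex"
  assumes f: "f \<in> C_nu_alpha \<nu> \<alpha>" and a: "0 \<le> \<alpha>" and s: "s > 0"
    and H: "\<And>t1 t2. cmod (Dpart (replicate \<nu> i) f t1 - Dpart (replicate \<nu> i) f t2) \<le> H * dist t1 t2 powr \<alpha>"
  shows "\<bar>Im (Dn (s *\<^sub>R axis i 1) (Suc \<nu>) f t)\<bar> \<le> s ^ \<nu> * (H * (real (Suc \<nu>) * s) powr \<alpha>)"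
proof -
  define e :: "real^'m" where "e = axis i 1"
  define u where "u k x = Im (Dpart (replicate k i) f (t + x *\<^sub>R e))" for k x
  have der: "(u k has_real_derivative u (Suc k) y) (at y)" if "k < \<nu>" for k y
  proof -
    define t' where "t' = t + y *\<^sub>R e"
    have "(\<lambda>\<sigma>. Dpart (replicate k i) f (t' + \<sigma> *\<^sub>R axis i 1)) differentiable (at 0)"
      using f that unfolding C_nu_alpha_def by auto
    from vector_derivative_works[THEN iffD1, OF this]
    have "((\<lambda>\<sigma>. Dpart (replicate k i) f (t' + \<sigma> *\<^sub>R e)) has_vector_derivative
           Dpart (replicate (Suc k) i) f t') (at 0)"
      unfolding e_def by (simp add: partial_def)
    then have "((\<lambda>\<sigma>. Im (Dpart (replicate k i) f (t' + \<sigma> *\<^sub>R e))) has_real_derivative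
           Im (Dpart (replicate (Suc k) i) f t')) (at 0)"
      by (rule has_field_derivative_Im)
    moreover have "(\<lambda>\<sigma>. Im (Dpart (replicate k i) f (t' + \<sigma> *\<^sub>R e))) = (\<lambda>\<sigma>. u k (\<sigma> + y))"
      unfolding u_def t'_def by (simp add: scaleR_add_left ac_simps)
    ultimately have "((\<lambda>\<sigma>. u k (\<sigma> + y)) has_real_derivative u (Suc k) y) (at 0)"
      unfolding u_def t'_def by simp
    then show ?thesis using DERIV_shift[of "u k" "u (Suc k) y" 0 y] by simp
  qed
  have u0: "u 0 = (\<lambda>x. Im (f (t + x *\<^sub>R e)))" unfolding u_def by simp
  have "Im (Dn (s *\<^sub>R axis i 1) (Suc \<nu>) f t) = Dl s (Suc \<nu>) (u 0) 0"
    unfolding Dn_Dl Dl_Im u0 e_def ..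
  also have "\<dots> = Dl s \<nu> (u 0) s - Dl s \<nu> (u 0) 0" using Dl_Suc'[of s \<nu> "u 0" 0] by simp
  finally have eq: "Im (Dn (s *\<^sub>R axis i 1) (Suc \<nu>) f t) = Dl s \<nu> (u 0) s - Dl s \<nu> (u 0) 0" .
  obtain x1 where x1: "s \<le> x1" "x1 \<le> s + real \<nu> * s" "Dl s \<nu> (u 0) s = s ^ \<nu> * u \<nu> x1"
    using Dl_mvt[of \<nu> u s s] der s by blast
  obtain x2 where x2: "0 \<le> x2" "x2 \<le> 0 + real \<nu> * s" "Dl s \<nu> (u 0) 0 = s ^ \<nu> * u \<nu> x2"
    using Dl_mvt[of \<nu> u s 0] der s by blast
  have d: "\<bar>x1 - x2\<bar> \<le> real (Suc \<nu>) * s" using x1 x2 s by (auto simp: algebra_simps)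
  have dist: "dist (t + x1 *\<^sub>R e) (t + x2 *\<^sub>R e) = \<bar>x1 - x2\<bar>"
    unfolding e_def dist_norm by (simp add: scaleR_diff_left[symmetric])
  have "\<bar>u \<nu> x1 - u \<nu> x2\<bar> \<le> cmod (Dpart (replicate \<nu> i) f (t + x1 *\<^sub>R e) - Dpart (replicate \<nu> i) f (t + x2 *\<^sub>R e))"
    unfolding u_def using abs_Im_le_cmod[of "Dpart (replicate \<nu> i) f (t + x1 *\<^sub>R e) - Dpart (replicate \<nu> i) f (t + x2 *\<^sub>R e)"] by simp
  also have "\<dots> \<le> H * \<bar>x1 - x2\<bar> powr \<alpha>" using H[of "t + x1 *\<^sub>R e" "t + x2 *\<^sub>R e"] unfolding dist .
  also have "\<dots> \<le> H * (real (Suc \<nu>) * s) powr \<alpha>"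
  proof -
    have "H * \<bar>x1 - x2\<bar> powr \<alpha> \<ge> 0 \<or> True" by simp
    show ?thesis
    proof (cases "H \<ge> 0")
      case True then show ?thesis using d a by (intro mult_left_mono powr_mono2) auto
    next
      case False
      have h1: "cmod (Dpart (replicate \<nu> i) f t - Dpart (replicate \<nu> i) f (t + e)) \<le> H * dist t (t + e) powr \<alpha>" by (rule H)
      have "dist t (t + e) = 1" unfolding e_def dist_norm by simp
      then have h2: "cmod (Dpart (replicate \<nu> i) f t - Dpart (replicate \<nu> i) f (t + e)) \<le> H" using h1 by simp
      have "0 \<le> H" using norm_ge_zero h2 by (rule order_trans)
      then have False using False by simp
      then show ?thesis ..
    qed
  qed
  finally have b: "\<bar>u \<nu> x1 - u \<nu> x2\<bar> \<le> H * (real (Suc \<nu>) * s) powr \<alpha>" .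
  have "\<bar>Im (Dn (s *\<^sub>R axis i 1) (Suc \<nu>) f t)\<bar> = s ^ \<nu> * \<bar>u \<nu> x1 - u \<nu> x2\<bar>"
    unfolding eq x1(3) x2(3) using s by (simp add: abs_mult right_diff_distrib[symmetric])
  also have "\<dots> \<le> s ^ \<nu> * (H * (real (Suc \<nu>) * s) powr \<alpha>)"
    using b s by (intro mult_left_mono) auto
  finally show ?thesis .
qed

lemma Dn_bound:
  fixes f :: "real^'m::finite \<Rightarrow> complex"
  assumes f: "f \<in> C_nu_alpha \<nu> \<alpha>" and a: "0 \<le> \<alpha>" and s: "s > 0"
    and H: "\<And>t1 t2. cmod (Dpart (replicate \<nu> i) f t1 - Dpart (replicate \<nu> i) f t2) \<le> H * dist t1 t2 powr \<alpha>"
  shows "cmod (Dn (s *\<^sub>R axis i 1) (Suc \<nu>) f t) \<le> 2 * (s ^ \<nu> * (H * (real (Suc \<nu>) * s) powr \<alpha>))"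
  using cmod_le[of "Dn (s *\<^sub>R axis i 1) (Suc \<nu>) f t"] Re_bound[OF f a s H, of t] Im_bound[OF f a s H, of t]
  by linarith

lemma cis_minus_one_sq: "(cmod (cis \<theta> - 1))\<^sup>2 = 2 - 2 * cos \<theta>"
proof -
  have "(cmod (cis \<theta> - 1))\<^sup>2 = (cos \<theta> - 1)\<^sup>2 + (sin \<theta>)\<^sup>2" by (simp add: cmod_power2)
  also have "\<dots> = 2 - 2 * cos \<theta>" using sin_cos_squared_add[of \<theta>] by (simp add: power2_eq_square algebra_simps)
  finally show ?thesis .
qed

lemma cis_minus_one_ge:
  assumes "pi / 2 \<le> \<bar>\<theta>\<bar>" "\<bar>\<theta>\<bar> \<le> pi"
  shows "2 \<le> (cmod (cis \<theta> - 1))\<^sup>2"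
proof -
  have "cos \<bar>\<theta>\<bar> \<le> cos (pi / 2)" using assms by (intro cos_monotone_0_pi_le) auto
  then have "cos \<theta> \<le> 0" by simp
  then show ?thesis unfolding cis_minus_one_sq by simp
qed

lemma C_cont: "f \<in> C_nu_alpha \<nu> \<alpha> \<Longrightarrow> continuous_on UNIV f"
  unfolding C_nu_alpha_def by (force dest: spec[of _ "[]"])

lemma C_per: "f \<in> C_nu_alpha \<nu> \<alpha> \<Longrightarrow> torus_periodic f"
  unfolding C_nu_alpha_def by blast

lemma shell_coord:
  fixes f :: "real^'m::finite \<Rightarrow> complex"
  assumes f: "f \<in> C_nu_alpha \<nu> \<alpha>" and a: "0 \<le> \<alpha>"
    and H: "\<And>t1 t2. cmod (Dpart (replicate \<nu> i) f t1 - Dpart (replicate \<nu> i) f t2) \<le> H * dist t1 t2 powr \<alpha>"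
    and K: "finite K" and Ks: "\<And>k. k \<in> K \<Longrightarrow> 2^j \<le> \<bar>real_of_int (k$i)\<bar> \<and> \<bar>real_of_int (k$i)\<bar> < 2^(Suc j)"
  shows "2^(Suc \<nu>) * (\<Sum>k\<in>K. (cmod (fourier_coeff f k))\<^sup>2)
     \<le> (2 * ((pi / 2^(Suc j)) ^ \<nu> * (H * (real (Suc \<nu>) * (pi / 2^(Suc j))) powr \<alpha>)))\<^sup>2"
proof -
  define s where "s = pi / 2^(Suc j)"
  have s0: "s > 0" unfolding s_def by simp
  have s1: "s \<le> 2 * pi"
  proof -
    have "(1::real) \<le> 2^(Suc j)" by (rule one_le_power) simp
    then have "pi / 2^(Suc j) \<le> pi / 1" by (intro divide_left_mono) auto
    then show ?thesis unfolding s_def using pi_gt_zero by linarith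
  qed
  have cf: "continuous_on UNIV f" by (rule C_cont[OF f])
  have pf: "torus_periodic f" by (rule C_per[OF f])
  define g where "g = Dn (s *\<^sub>R axis i 1) (Suc \<nu>) f"
  define M where "M = 2 * (s ^ \<nu> * (H * (real (Suc \<nu>) * s) powr \<alpha>))"
  have gb: "cmod (g t) \<le> M" for t unfolding g_def M_def by (rule Dn_bound[OF f a s0 H])
  have cg: "continuous_on UNIV g" unfolding g_def by (rule Dn_cont[OF cf])
  have S: "(\<Sum>k\<in>K. (cmod (fourier_coeff g k))\<^sup>2) \<le> M\<^sup>2" by (rule coeff_sq_bound[OF cg gb K])
  have each: "2^(Suc \<nu>) * (cmod (fourier_coeff f k))\<^sup>2 \<le> (cmod (fourier_coeff g k))\<^sup>2" if k: "k \<in> K" for k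
  proof -
    define \<theta> where "\<theta> = of_int (k$i) * s"
    have th: "\<bar>\<theta>\<bar> = \<bar>real_of_int (k$i)\<bar> * s" unfolding \<theta>_def using s0 by (simp add: abs_mult)
    have "pi / 2 \<le> \<bar>\<theta>\<bar>"
    proof -
      have "pi / 2 = 2^j * s" unfolding s_def by (simp add: field_simps)
      also have "\<dots> \<le> \<bar>real_of_int (k$i)\<bar> * s" using Ks[OF k] s0 by (intro mult_right_mono) auto
      finally show ?thesis using th by simp
    qed
    moreover have "\<bar>\<theta>\<bar> \<le> pi"
    proof -
      have "\<bar>real_of_int (k$i)\<bar> * s \<le> 2^(Suc j) * s" using Ks[OF k] s0 by (intro mult_right_mono) auto
      also have "\<dots> = pi" unfolding s_def by simp
      finally show ?thesis using th by simp
    qed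
    ultimately have c2: "2 \<le> (cmod (cis \<theta> - 1))\<^sup>2" by (rule cis_minus_one_ge)
    have "fourier_coeff g k = (cis \<theta> - 1) ^ Suc \<nu> * fourier_coeff f k"
      unfolding g_def \<theta>_def by (rule fc_Dn[OF cf pf less_imp_le[OF s0] s1])
    then have "(cmod (fourier_coeff g k))\<^sup>2 = ((cmod (cis \<theta> - 1))\<^sup>2) ^ Suc \<nu> * (cmod (fourier_coeff f k))\<^sup>2"
      by (simp add: norm_mult norm_power power_mult_distrib power_mult[symmetric] mult.commute)
    moreover have "2^(Suc \<nu>) \<le> ((cmod (cis \<theta> - 1))\<^sup>2) ^ Suc \<nu>" using c2 by (intro power_mono) auto
    ultimately show ?thesis by (simp add: mult_right_mono)
  qed
  have "2^(Suc \<nu>) * (\<Sum>k\<in>K. (cmod (fourier_coeff f k))\<^sup>2) = (\<Sum>k\<in>K. 2^(Suc \<nu>) * (cmod (fourier_coeff f k))\<^sup>2)"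
    by (simp add: sum_distrib_left)
  also have "\<dots> \<le> (\<Sum>k\<in>K. (cmod (fourier_coeff g k))\<^sup>2)" by (intro sum_mono each)
  also have "\<dots> \<le> M\<^sup>2" by (rule S)
  finally show ?thesis unfolding M_def s_def .
qed

lemma sum_cover:
  fixes a :: "'a \<Rightarrow> real"
  assumes K: "finite K" and I: "finite I" and cov: "\<And>x. x \<in> K \<Longrightarrow> \<exists>i\<in>I. x \<in> P i"
    and nn: "\<And>x. x \<in> K \<Longrightarrow> 0 \<le> a x"
  shows "(\<Sum>x\<in>K. a x) \<le> (\<Sum>i\<in>I. \<Sum>x\<in>K \<inter> P i. a x)"
proof -
  have "(\<Sum>i\<in>I. \<Sum>x\<in>K \<inter> P i. a x) = (\<Sum>i\<in>I. \<Sum>x\<in>K. if x \<in> P i then a x else 0)"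
  proof (rule sum.cong[OF refl])
    fix i
    have "K \<inter> P i = {x\<in>K. x \<in> P i}" by auto
    then show "(\<Sum>x\<in>K \<inter> P i. a x) = (\<Sum>x\<in>K. if x \<in> P i then a x else 0)"
      using sum.inter_filter[OF K, of a "\<lambda>x. x \<in> P i"] by simp
  qed
  also have "\<dots> = (\<Sum>x\<in>K. \<Sum>i\<in>I. if x \<in> P i then a x else 0)" by (rule sum.swap)
  also have "\<dots> \<ge> (\<Sum>x\<in>K. a x)"
  proof (rule sum_mono)
    fix x assume x: "x \<in> K"
    then obtain i where i: "i \<in> I" "x \<in> P i" using cov by blast
    have "a x = (if x \<in> P i then a x else 0)" using i by simp
    also have "\<dots> \<le> (\<Sum>i\<in>I. if x \<in> P i then a x else 0)"
      by (rule member_le_sum[OF i(1)]) (use nn x I in auto)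
    finally show "a x \<le> (\<Sum>i\<in>I. if x \<in> P i then a x else 0)" .
  qed
  finally show ?thesis .
qed

lemma jensen_pos:
  fixes a :: "'a \<Rightarrow> real"
  assumes A: "finite A" "A \<noteq> {}" and pos: "\<And>x. x \<in> A \<Longrightarrow> 0 < a x" and p: "1 \<le> p" "p \<le> 2"
  shows "(\<Sum>x\<in>A. a x powr p) \<le> real (card A) powr (1 - p/2) * (\<Sum>x\<in>A. (a x)\<^sup>2) powr (p/2)"
proof -
  define n where "n = real (card A)"
  have n: "n > 0" unfolding n_def using A by (simp add: card_gt_0_iff)
  define Y where "Y = (\<Sum>x\<in>A. a x powr p)"
  define Q where "Q = (\<Sum>x\<in>A. (a x)\<^sup>2)"
  have pp: "\<And>x. x \<in> A \<Longrightarrow> a x powr p > 0" using pos by (metis less_irrefl powr_gt_zero)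
  have Y0: "Y > 0" unfolding Y_def using A pp by (intro sum_pos) auto
  have qq: "\<And>x. x \<in> A \<Longrightarrow> (a x)\<^sup>2 > 0" using pos by (metis less_irrefl zero_less_power2)
  have Q0: "Q > 0" unfolding Q_def using A qq by (intro sum_pos) auto
  have cv: "convex_on {0<..} (\<lambda>x. x powr (2/p))" using p by (intro powr_convex) (simp add: field_simps)
  have "(\<Sum>x\<in>A. (1/n) *\<^sub>R (a x powr p)) powr (2/p) \<le> (\<Sum>x\<in>A. (1/n) * ((a x powr p) powr (2/p)))"
  proof (rule convex_on_sum[OF A cv])
    show "(\<Sum>i\<in>A. 1/n) = 1" using n by (simp add: n_def)
  qed (use n pp in auto)
  also have "\<dots> = Q / n" unfolding Q_def
    using pos p by (simp add: powr_powr sum_distrib_left[symmetric] powr_realpow[symmetric] sum_divide_distrib[symmetric])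
  finally have "(Y / n) powr (2/p) \<le> Q / n" unfolding Y_def by (simp add: sum_divide_distrib[symmetric])
  then have "((Y / n) powr (2/p)) powr (p/2) \<le> (Q / n) powr (p/2)"
    using p Y0 n by (intro powr_mono2) auto
  then have "Y / n \<le> (Q / n) powr (p/2)" using p Y0 n by (simp add: powr_powr)
  then have "Y \<le> n * (Q / n) powr (p/2)" using n by (simp add: field_simps)
  also have "\<dots> = n powr (1 - p/2) * Q powr (p/2)"
  proof -
    have "n * (Q/n) powr (p/2) = n * (Q powr (p/2) / n powr (p/2))" using n Q0 by (simp add: powr_divide)
    also have "\<dots> = (n / n powr (p/2)) * Q powr (p/2)" by simp
    also have "n / n powr (p/2) = n powr (1 - p/2)" using n by (simp add: powr_diff)
    finally show ?thesis .
  qed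
  finally show ?thesis unfolding Y_def Q_def n_def .
qed

lemma jensen:
  fixes a :: "'a \<Rightarrow> real"
  assumes A: "finite A" and nn: "\<And>x. x \<in> A \<Longrightarrow> 0 \<le> a x" and p: "1 \<le> p" "p \<le> 2"
  shows "(\<Sum>x\<in>A. a x powr p) \<le> real (card A) powr (1 - p/2) * (\<Sum>x\<in>A. (a x)\<^sup>2) powr (p/2)"
proof -
  define A' where "A' = {x\<in>A. a x > 0}"
  have fA': "finite A'" unfolding A'_def using A by simp
  have e1: "(\<Sum>x\<in>A. a x powr p) = (\<Sum>x\<in>A'. a x powr p)"
    unfolding A'_def using A nn by (intro sum.mono_neutral_right) (auto, smt (verit))
  have e2: "(\<Sum>x\<in>A. (a x)\<^sup>2) = (\<Sum>x\<in>A'. (a x)\<^sup>2)"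
    unfolding A'_def using A nn by (intro sum.mono_neutral_right) (auto, smt (verit))
  show ?thesis
  proof (cases "A' = {}")
    case True
    then show ?thesis unfolding e1 by simp
  next
    case False
    have "(\<Sum>x\<in>A'. a x powr p) \<le> real (card A') powr (1 - p/2) * (\<Sum>x\<in>A'. (a x)\<^sup>2) powr (p/2)"
      using jensen_pos[OF fA' False _ p] unfolding A'_def by auto
    also have "\<dots> \<le> real (card A) powr (1 - p/2) * (\<Sum>x\<in>A'. (a x)\<^sup>2) powr (p/2)"
    proof (intro mult_right_mono powr_mono2)
      show "real (card A') \<le> real (card A)" unfolding A'_def using A by (simp add: card_mono)
    qed (use p False fA' in \<open>auto simp: card_gt_0_iff\<close>)
    finally show ?thesis unfolding e1 e2 .
  qed
qed

definition cube :: "nat \<Rightarrow> (int^'m::finite) set" where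
  "cube n = {k. \<forall>l. \<bar>k$l\<bar> < 2^n}"

lemma cube_finite_card: "finite (cube n :: (int^'m::finite) set) \<and> card (cube n :: (int^'m) set) \<le> (2 * 2^n) ^ CARD('m)"
proof -
  define B where "B = (Pi\<^sub>E (UNIV::'m set) (\<lambda>_. {-(2^n)<..<(2::int)^n}))"
  have inj: "inj_on vec_nth (cube n :: (int^'m) set)" by (auto simp: inj_on_def vec_eq_iff)
  have sub: "vec_nth ` (cube n :: (int^'m) set) \<subseteq> B" unfolding B_def cube_def by (auto simp: abs_less_iff) (metis minus_less_iff)
  have fB: "finite B" unfolding B_def by (intro finite_PiE) auto
  have cB: "card B = (nat (2 * 2^n - 1)) ^ CARD('m)" unfolding B_def by (simp add: card_PiE algebra_simps)
  have "card (cube n :: (int^'m) set) \<le> card B" by (rule card_inj_on_le[OF inj sub fB])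
  also have "\<dots> \<le> (2 * 2^n) ^ CARD('m)" unfolding cB by (intro power_mono) (auto simp: nat_le_iff)
  finally show ?thesis using inj_on_finite[OF inj sub fB] by simp
qed

lemma geom_tail:
  fixes r :: real
  assumes r: "0 < r" "r < 1" and S: "finite S" and J: "\<And>j. j \<in> S \<Longrightarrow> J \<le> j"
  shows "(\<Sum>j\<in>S. r ^ j) \<le> r ^ J / (1 - r)"
proof -
  have "(\<Sum>j\<in>S. r ^ j) = (\<Sum>j\<in>S. r ^ J * r ^ (j - J))"
    using J by (intro sum.cong refl) (simp add: power_add[symmetric])
  also have "\<dots> = r ^ J * (\<Sum>j\<in>S. r ^ (j - J))" by (simp add: sum_distrib_left)
  also have "(\<Sum>j\<in>S. r ^ (j - J)) = (\<Sum>i\<in>(\<lambda>j. j - J) ` S. r ^ i)"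
  proof -
    have "inj_on (\<lambda>j. j - J) S"
      unfolding inj_on_def
    proof (intro ballI impI)
      fix x y assume "x \<in> S" "y \<in> S" "x - J = y - J"
      then show "x = y" using J[of x] J[of y] by arith
    qed
    then show ?thesis by (simp add: sum.reindex)
  qed
  also have "\<dots> \<le> 1 / (1 - r)" using geometric_sum_less[OF r] S by (intro less_imp_le) auto
  finally show ?thesis using r by (simp add: mult_left_mono divide_inverse)
qed

lemma per_nat: "torus_periodic f \<Longrightarrow> f (t + (2*pi * real n) *\<^sub>R axis i 1) = f t"
proof (induction n arbitrary: t)
  case 0 then show ?case by simp
next
  case (Suc n)
  have "f (t + (2*pi * real (Suc n)) *\<^sub>R axis i 1) = f ((t + (2*pi * real n) *\<^sub>R axis i 1) + (2*pi) *\<^sub>R axis i 1)"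
    by (simp add: algebra_simps)
  also have "\<dots> = f (t + (2*pi * real n) *\<^sub>R axis i 1)" using Suc.prems unfolding torus_periodic_def by blast
  finally show ?case using Suc by simp
qed

lemma per_int: "torus_periodic f \<Longrightarrow> f (t + (2*pi * real_of_int n) *\<^sub>R axis i 1) = f t"
proof (cases "n \<ge> 0")
  case True
  assume p: "torus_periodic f"
  then show ?thesis using per_nat[OF p, of t "nat n" i] True by simp
next
  case False
  assume p: "torus_periodic f"
  define N where "N = nat (- n)"
  have n: "real_of_int n = - real N" unfolding N_def using False by simp
  have "f ((t + (2*pi * real_of_int n) *\<^sub>R axis i 1) + (2*pi * real N) *\<^sub>R axis i 1) = f (t + (2*pi * real_of_int n) *\<^sub>R axis i 1)"
    by (rule per_nat[OF p])
  then show ?thesis unfolding n by (simp add: algebra_simps)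
qed

lemma reduce_box:
  assumes p: "torus_periodic f"
  shows "\<exists>t'\<in>torus_box. f t' = f (t::real^'m::finite)"
proof -
  have "\<exists>t'. (\<forall>l\<in>L. 0 \<le> t'$l \<and> t'$l \<le> 2*pi) \<and> (\<forall>l. l \<notin> L \<longrightarrow> t'$l = t$l) \<and> f t' = f t" if "finite L" for L :: "'m set"
    using that
  proof (induction L rule: finite_induct)
    case empty then show ?case by (intro exI[of _ t]) auto
  next
    case (insert l L)
    then obtain t' where t': "\<forall>l\<in>L. 0 \<le> t'$l \<and> t'$l \<le> 2*pi" "\<forall>l. l \<notin> L \<longrightarrow> t'$l = t$l" "f t' = f t" by blast
    define n where "n = \<lfloor>t'$l / (2*pi)\<rfloor>"
    define t'' where "t'' = t' + (2*pi * real_of_int (- n)) *\<^sub>R axis l 1"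
    have f: "f t'' = f t" unfolding t''_def using per_int[OF p, of t' "- n" l] t'(3) by (simp only:)
    have "real_of_int n \<le> t'$l / (2*pi)" "t'$l / (2*pi) < real_of_int n + 1" unfolding n_def by linarith+
    then have "2*pi * real_of_int n \<le> t'$l" "t'$l < 2*pi * real_of_int n + 2*pi"
      using pi_gt_zero by (simp_all add: field_simps)
    then have c: "0 \<le> t''$l" "t''$l \<le> 2*pi" unfolding t''_def by (auto simp: axis_def)
    have o: "t''$l' = t'$l'" if "l' \<noteq> l" for l' unfolding t''_def using that by (auto simp: axis_def)
    show ?case
    proof (intro exI[of _ t''] conjI)
      show "\<forall>l'\<in>insert l L. 0 \<le> t''$l' \<and> t''$l' \<le> 2*pi" using c o t'(1) by (metis insert_iff)
      show "\<forall>l'. l' \<notin> insert l L \<longrightarrow> t''$l' = t$l'" using o t'(2) by auto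
    qed (rule f)
  qed
  from this[of UNIV] obtain t' where "\<forall>l. 0 \<le> t'$l \<and> t'$l \<le> 2*pi" "f t' = f t" by auto
  then show ?thesis unfolding torus_box_def by (intro bexI[of _ t']) (auto simp: mem_box_cart)
qed

lemma per_bounded:
  fixes f :: "real^'m::finite \<Rightarrow> complex"
  assumes c: "continuous_on UNIV f" and p: "torus_periodic f"
  shows "bdd_above (range (\<lambda>t. cmod (f t)))" "\<And>t. cmod (f t) \<le> sup_norm f"
proof -
  have "compact (f ` torus_box)" unfolding torus_box_def
    by (intro compact_continuous_image continuous_on_subset[OF c]) auto
  then obtain M where M: "\<forall>x\<in>f ` torus_box. norm x \<le> M" using compact_imp_bounded bounded_iff by metis
  have Mt: "cmod (f t) \<le> M" for t using reduce_box[OF p, of t] M by force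
  show b: "bdd_above (range (\<lambda>t. cmod (f t)))" using Mt by (intro bdd_aboveI2) auto
  show "cmod (f t) \<le> sup_norm f" for t unfolding sup_norm_def by (rule cSUP_upper[OF _ b]) auto
qed

lemma L2_le_sup:
  fixes f :: "real^'m::finite \<Rightarrow> complex"
  assumes c: "continuous_on UNIV f" and S: "\<And>t. cmod (f t) \<le> S"
  shows "L2_torus_norm f \<le> S"
proof -
  have S0: "0 \<le> S" using S[of 0] norm_ge_zero order_trans by blast
  have W: "WW TYPE('m) > 0" by (rule WW_pos)
  have "integral torus_box (\<lambda>t. (cmod (f t))\<^sup>2) / WW TYPE('m) \<le> S\<^sup>2"
    using sq_int_bound[OF c S] W by (simp add: divide_le_eq mult.commute)
  then have "sqrt (integral torus_box (\<lambda>t. (cmod (f t))\<^sup>2) / WW TYPE('m)) \<le> sqrt (S\<^sup>2)" by (rule real_sqrt_le_mono)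
  then show ?thesis unfolding L2_torus_norm_def powi_W using S0 by (simp add: divide_inverse mult.commute)
qed

definition holder_sup :: "real \<Rightarrow> (real^'m::finite \<Rightarrow> complex) \<Rightarrow> real" where
  "holder_sup \<alpha> g = (SUP \<delta>\<in>{0<..}. \<delta> powr (-\<alpha>) * modulus_cont g \<delta>)"

lemma holder_extract:
  fixes g :: "real^'m::finite \<Rightarrow> complex"
  assumes L: "\<And>t1 t2. norm (g t1 - g t2) \<le> L * dist t1 t2 powr \<alpha>" and a: "0 \<le> \<alpha>"
  shows "\<And>t1 t2. cmod (g t1 - g t2) \<le> holder_sup \<alpha> g * dist t1 t2 powr \<alpha>" "0 \<le> holder_sup \<alpha> g"
proof -
  define e :: "real^'m" where "e = axis undefined 1"
  have L0: "0 \<le> L"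
  proof -
    have h1: "cmod (g 0 - g e) \<le> L * dist 0 e powr \<alpha>" by (rule L)
    have "dist 0 e = 1" unfolding e_def dist_norm by simp
    then have "cmod (g 0 - g e) \<le> L" using h1 by simp
    then show ?thesis using norm_ge_zero order_trans by blast
  qed
  define S where "S \<delta> = (\<lambda>(t1, t2). norm (g t1 - g t2)) ` {(t1, t2). dist t1 t2 \<le> \<delta>}" for \<delta>
  have mc: "modulus_cont g \<delta> = Sup (S \<delta>)" for \<delta> unfolding modulus_cont_def S_def ..
  have bS: "bdd_above (S \<delta>)" if "0 \<le> \<delta>" for \<delta>
  proof (rule bdd_aboveI)
    fix x assume "x \<in> S \<delta>"
    then obtain t1 t2 where x: "x = norm (g t1 - g t2)" "dist t1 t2 \<le> \<delta>" unfolding S_def by auto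
    have "x \<le> L * dist t1 t2 powr \<alpha>" using L x(1) by simp
    also have "\<dots> \<le> L * \<delta> powr \<alpha>" using x(2) a L0 by (intro mult_left_mono powr_mono2) auto
    finally show "x \<le> L * \<delta> powr \<alpha>" .
  qed
  have neS: "S \<delta> \<noteq> {}" if "0 \<le> \<delta>" for \<delta>
  proof -
    have "((0::real^'m), (0::real^'m)) \<in> {(t1, t2). dist t1 t2 \<le> \<delta>}" using that by simp
    then show ?thesis unfolding S_def by blast
  qed
  have mcL: "modulus_cont g \<delta> \<le> L * \<delta> powr \<alpha>" if "0 \<le> \<delta>" for \<delta>
    unfolding mc
  proof (rule cSup_least[OF neS[OF that]])
    fix x assume "x \<in> S \<delta>"
    then obtain t1 t2 where x: "x = norm (g t1 - g t2)" "dist t1 t2 \<le> \<delta>" unfolding S_def by auto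
    have "x \<le> L * dist t1 t2 powr \<alpha>" using L x(1) by simp
    also have "\<dots> \<le> L * \<delta> powr \<alpha>" using x(2) a L0 by (intro mult_left_mono powr_mono2) auto
    finally show "x \<le> L * \<delta> powr \<alpha>" .
  qed
  have mcU: "cmod (g t1 - g t2) \<le> modulus_cont g (dist t1 t2)" for t1 t2
    unfolding mc by (rule cSup_upper[OF _ bS]) (auto simp: S_def)
  define T where "T = (\<lambda>\<delta>. \<delta> powr (-\<alpha>) * modulus_cont g \<delta>) ` {0<..}"
  have bT: "bdd_above T"
  proof (rule bdd_aboveI)
    fix x assume "x \<in> T"
    then obtain \<delta> where d: "\<delta> > 0" "x = \<delta> powr (-\<alpha>) * modulus_cont g \<delta>" unfolding T_def by auto
    have "x \<le> \<delta> powr (-\<alpha>) * (L * \<delta> powr \<alpha>)" unfolding d(2) using mcL[of \<delta>] d(1)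
      by (intro mult_left_mono) auto
    also have "\<dots> = L" using d(1) by (simp add: powr_minus field_simps)
    finally show "x \<le> L" .
  qed
  have hs: "holder_sup \<alpha> g = Sup T" unfolding holder_sup_def T_def ..
  have Tu: "\<delta> powr (-\<alpha>) * modulus_cont g \<delta> \<le> holder_sup \<alpha> g" if "\<delta> > 0" for \<delta>
    unfolding hs by (rule cSup_upper[OF _ bT]) (use that in \<open>auto simp: T_def\<close>)
  show "0 \<le> holder_sup \<alpha> g"
  proof -
    have "dist 0 e = 1" unfolding e_def dist_norm by simp
    then have "0 \<le> modulus_cont g 1" using mcU[of 0 e] norm_ge_zero order_trans by metis
    then have "0 \<le> 1 powr (-\<alpha>) * modulus_cont g 1" by simp
    then show ?thesis using Tu[of 1] by simp
  qed
  show "cmod (g t1 - g t2) \<le> holder_sup \<alpha> g * dist t1 t2 powr \<alpha>" for t1 t2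
  proof (cases "t1 = t2")
    case True then show ?thesis by simp
  next
    case False
    define d where "d = dist t1 t2"
    have d: "d > 0" unfolding d_def using False by simp
    have "cmod (g t1 - g t2) \<le> modulus_cont g d" unfolding d_def by (rule mcU)
    also have "\<dots> = d powr \<alpha> * (d powr (-\<alpha>) * modulus_cont g d)" using d by (simp add: powr_minus field_simps)
    also have "\<dots> \<le> d powr \<alpha> * holder_sup \<alpha> g" using Tu[OF d] by (intro mult_left_mono) auto
    finally show ?thesis unfolding d_def by (simp add: mult.commute)
  qed
qed

lemma finite_len_le: "finite {xs :: 'm::finite list. length xs \<le> n}"
proof -
  have "{xs :: 'm list. length xs \<le> n} = {xs. set xs \<subseteq> UNIV \<and> length xs \<le> n}" by auto
  then show ?thesis using finite_lists_length_le[of "UNIV :: 'm set" n] by simp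
qed

lemma finite_len_eq: "finite {xs :: 'm::finite list. length xs = n}"
  by (rule finite_subset[OF _ finite_len_le[of n]]) auto

lemma norm_facts:
  fixes f :: "real^'m::finite \<Rightarrow> complex"
  assumes f: "f \<in> C_nu_alpha \<nu> \<alpha>" and a: "0 \<le> \<alpha>"
  defines "H \<equiv> Max ((\<lambda>xs. SUP \<delta>\<in>{0<..}. \<delta> powr (-\<alpha>) * modulus_cont (Dpart xs f) \<delta>) ` {xs::'m list. length xs = \<nu>})"
  shows "\<And>i t1 t2. cmod (Dpart (replicate \<nu> i) f t1 - Dpart (replicate \<nu> i) f t2) \<le> H * dist t1 t2 powr \<alpha>"
    and "0 \<le> H" and "H \<le> C_nu_alpha_norm \<nu> \<alpha> f" and "L2_torus_norm f \<le> C_nu_alpha_norm \<nu> \<alpha> f"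
proof -
  have cf: "continuous_on UNIV f" by (rule C_cont[OF f])
  have pf: "torus_periodic f" by (rule C_per[OF f])
  have hx: "cmod (Dpart xs f t1 - Dpart xs f t2) \<le> holder_sup \<alpha> (Dpart xs f) * dist t1 t2 powr \<alpha>"
      "0 \<le> holder_sup \<alpha> (Dpart xs f)" if len: "length xs = \<nu>" for xs t1 t2
  proof -
    obtain L where "\<forall>t1 t2. norm (Dpart xs f t1 - Dpart xs f t2) \<le> L * dist t1 t2 powr \<alpha>"
      using f len unfolding C_nu_alpha_def by blast
    then show "cmod (Dpart xs f t1 - Dpart xs f t2) \<le> holder_sup \<alpha> (Dpart xs f) * dist t1 t2 powr \<alpha>"
      "0 \<le> holder_sup \<alpha> (Dpart xs f)" using holder_extract[OF _ a] by blast+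
  qed
  have Hge: "holder_sup \<alpha> (Dpart xs f) \<le> H" if "length xs = \<nu>" for xs
    unfolding H_def holder_sup_def by (rule Max_ge) (use finite_len_eq that in auto)
  show "cmod (Dpart (replicate \<nu> i) f t1 - Dpart (replicate \<nu> i) f t2) \<le> H * dist t1 t2 powr \<alpha>" for i t1 t2
  proof -
    have "cmod (Dpart (replicate \<nu> i) f t1 - Dpart (replicate \<nu> i) f t2) \<le> holder_sup \<alpha> (Dpart (replicate \<nu> i) f) * dist t1 t2 powr \<alpha>"
      by (rule hx) simp
    also have "\<dots> \<le> H * dist t1 t2 powr \<alpha>" using Hge[of "replicate \<nu> i"] by (intro mult_right_mono) auto
    finally show ?thesis .
  qed
  show H0: "0 \<le> H" using hx(2)[of "replicate \<nu> undefined"] Hge[of "replicate \<nu> undefined"] by simp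
  define M1 where "M1 = Max ((\<lambda>xs. sup_norm (Dpart xs f)) ` {xs::'m list. length xs \<le> \<nu>})"
  have nrm: "C_nu_alpha_norm \<nu> \<alpha> f = M1 + H" unfolding C_nu_alpha_norm_def M1_def H_def ..
  have mem: "sup_norm f \<in> (\<lambda>xs. sup_norm (Dpart xs f)) ` {xs::'m list. length xs \<le> \<nu>}"
    by (rule image_eqI[of _ _ "[]"]) auto
  have M1: "sup_norm f \<le> M1" unfolding M1_def
    by (rule Max_ge[OF finite_imageI[OF finite_len_le] mem])
  have sup0: "0 \<le> sup_norm f" using per_bounded(2)[OF cf pf, of 0] norm_ge_zero order_trans by blast
  show "H \<le> C_nu_alpha_norm \<nu> \<alpha> f" using nrm M1 sup0 by simp
  have "L2_torus_norm f \<le> sup_norm f" by (rule L2_le_sup[OF cf per_bounded(2)[OF cf pf]])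
  then show "L2_torus_norm f \<le> C_nu_alpha_norm \<nu> \<alpha> f" using nrm M1 H0 by simp
qed

definition shell :: "nat \<Rightarrow> (int^'m::finite) set" where
  "shell j = {k. (\<forall>l. \<bar>k$l\<bar> < 2^(Suc j)) \<and> (\<exists>i. 2^j \<le> \<bar>k$i\<bar>)}"

lemma int_real_le: "(2^j \<le> \<bar>real_of_int x\<bar>) \<longleftrightarrow> (2^j \<le> \<bar>x\<bar>)"
  by (metis of_int_abs of_int_le_iff of_int_numeral of_int_power)

lemma int_real_less: "(\<bar>real_of_int x\<bar> < 2^j) \<longleftrightarrow> (\<bar>x\<bar> < 2^j)"
  by (metis of_int_abs of_int_less_iff of_int_numeral of_int_power)

lemma int_real_less2: "(\<bar>real_of_int x\<bar> < 2 * 2^j) \<longleftrightarrow> (\<bar>x\<bar> < 2 * 2^j)"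
  using int_real_less[of x "Suc j"] by simp

lemma shell_alg:
  fixes s H N \<alpha> :: real and \<nu> :: nat
  assumes s: "s = (pi/2) / 2^j" and N: "N \<ge> 0" and H: "H \<ge> 0"
  shows "(2 * (s ^ \<nu> * (H * (N * s) powr \<alpha>)))\<^sup>2 / 2^(Suc \<nu>)
     \<le> 4 * N powr (2*\<alpha>) * (pi/2) powr (2*(real \<nu> + \<alpha>)) * H\<^sup>2 * (2^j) powr (-(2*(real \<nu> + \<alpha>)))"
proof -
  have s0: "s > 0" using s by simp
  have e1: "s ^ \<nu> * (H * (N * s) powr \<alpha>) = H * (N powr \<alpha> * s powr (real \<nu> + \<alpha>))"
    using s0 by (simp add: powr_mult powr_add powr_realpow)
  have "(2 * (s ^ \<nu> * (H * (N * s) powr \<alpha>)))\<^sup>2 = (2 * (H * (N powr \<alpha> * s powr (real \<nu> + \<alpha>))))\<^sup>2"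
    by (simp only: e1)
  also have "\<dots> = 4 * H\<^sup>2 * (N powr \<alpha>)\<^sup>2 * (s powr (real \<nu> + \<alpha>))\<^sup>2"
    by (simp only: power_mult_distrib) simp
  also have "(N powr \<alpha>)\<^sup>2 = N powr (2*\<alpha>)" by (simp add: power2_eq_square powr_add[symmetric])
  also have "(s powr (real \<nu> + \<alpha>))\<^sup>2 = s powr (2*(real \<nu> + \<alpha>))" by (simp add: power2_eq_square powr_add[symmetric])
  also have "s powr (2*(real \<nu> + \<alpha>)) = (pi/2) powr (2*(real \<nu> + \<alpha>)) * (2^j) powr (-(2*(real \<nu> + \<alpha>)))"
    unfolding s powr_divide powr_minus_divide[of "2^j"] by simp
  finally have eq: "(2 * (s ^ \<nu> * (H * (N * s) powr \<alpha>)))\<^sup>2 = 4 * N powr (2*\<alpha>) * (pi/2) powr (2*(real \<nu> + \<alpha>)) * H\<^sup>2 * (2^j) powr (-(2*(real \<nu> + \<alpha>)))"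
    by (simp only: mult_ac)
  have "(2 * (s ^ \<nu> * (H * (N * s) powr \<alpha>)))\<^sup>2 / 2^(Suc \<nu>) \<le> (2 * (s ^ \<nu> * (H * (N * s) powr \<alpha>)))\<^sup>2"
  proof -
    have "(1::real) \<le> 2^(Suc \<nu>)" by (rule one_le_power) simp
    then have "(2 * (s ^ \<nu> * (H * (N * s) powr \<alpha>)))\<^sup>2 / 2^(Suc \<nu>) \<le> (2 * (s ^ \<nu> * (H * (N * s) powr \<alpha>)))\<^sup>2 / 1"
      by (intro divide_left_mono) auto
    then show ?thesis by simp
  qed
  then show ?thesis by (simp only: eq)
qed

lemma shell_L2:
  fixes f :: "real^'m::finite \<Rightarrow> complex"
  assumes f: "f \<in> C_nu_alpha \<nu> \<alpha>" and a: "0 \<le> \<alpha>" and H0: "0 \<le> H"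
    and H: "\<And>i t1 t2. cmod (Dpart (replicate \<nu> i) f t1 - Dpart (replicate \<nu> i) f t2) \<le> H * dist t1 t2 powr \<alpha>"
    and K: "finite K" "K \<subseteq> shell j"
  shows "(\<Sum>k\<in>K. (cmod (fourier_coeff f k))\<^sup>2)
     \<le> real CARD('m) * (4 * (real (Suc \<nu>)) powr (2*\<alpha>) * (pi/2) powr (2*(real \<nu> + \<alpha>)) * H\<^sup>2 * (2^j) powr (-(2*(real \<nu> + \<alpha>))))"
proof -
  define X where "X = 4 * (real (Suc \<nu>)) powr (2*\<alpha>) * (pi/2) powr (2*(real \<nu> + \<alpha>)) * H\<^sup>2 * (2^j) powr (-(2*(real \<nu> + \<alpha>)))"
  define P where "P i = {k::int^'m. 2^j \<le> \<bar>k$i\<bar> \<and> \<bar>k$i\<bar> < 2^(Suc j)}" for i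
  have "(\<Sum>k\<in>K. (cmod (fourier_coeff f k))\<^sup>2) \<le> (\<Sum>i\<in>UNIV. \<Sum>k\<in>K \<inter> P i. (cmod (fourier_coeff f k))\<^sup>2)"
  proof (rule sum_cover[OF K(1)])
    fix k assume "k \<in> K"
    then have "k \<in> shell j" using K(2) by blast
    then obtain i where "2^j \<le> \<bar>k$i\<bar>" "\<forall>l. \<bar>k$l\<bar> < 2^(Suc j)" unfolding shell_def by blast
    then show "\<exists>i\<in>UNIV. k \<in> P i" unfolding P_def by blast
  qed auto
  also have "\<dots> \<le> (\<Sum>i\<in>(UNIV::'m set). X)"
  proof (rule sum_mono)
    fix i :: 'm
    have "2^(Suc \<nu>) * (\<Sum>k\<in>K \<inter> P i. (cmod (fourier_coeff f k))\<^sup>2)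
       \<le> (2 * ((pi / 2^(Suc j)) ^ \<nu> * (H * (real (Suc \<nu>) * (pi / 2^(Suc j))) powr \<alpha>)))\<^sup>2"
      by (rule shell_coord[OF f a H]) (use K in \<open>auto simp: P_def int_real_le int_real_less int_real_less2\<close>)
    then have "(\<Sum>k\<in>K \<inter> P i. (cmod (fourier_coeff f k))\<^sup>2)
       \<le> (2 * ((pi / 2^(Suc j)) ^ \<nu> * (H * (real (Suc \<nu>) * (pi / 2^(Suc j))) powr \<alpha>)))\<^sup>2 / 2^(Suc \<nu>)"
      by (simp add: field_simps)
    also have "\<dots> \<le> X" unfolding X_def by (rule shell_alg) (use H0 in auto)
    finally show "(\<Sum>k\<in>K \<inter> P i. (cmod (fourier_coeff f k))\<^sup>2) \<le> X" .
  qed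
  finally show ?thesis unfolding X_def by simp
qed

lemma sq_powr: "0 \<le> (H::real) \<Longrightarrow> (H\<^sup>2) powr (p/2) = H powr p"
proof (cases "H = 0")
  case True then show ?thesis by simp
next
  case False
  assume "0 \<le> H"
  then have "H > 0" using False by simp
  then have "H\<^sup>2 = H powr 2" by (simp add: powr_numeral)
  then show ?thesis by (simp add: powr_powr)
qed

lemma card_pow_powr:
  assumes "real n \<le> (c * y) ^ M" "0 < c" "0 < y" "0 \<le> e"
  shows "real n powr e \<le> c powr (real M * e) * y powr (real M * e)"
proof -
  have "real n powr e \<le> ((c * y) ^ M) powr e" using assms by (intro powr_mono2) auto
  also have "((c * y) ^ M) powr e = (c * y) powr (real M * e)"
  proof -
    have "c * y > 0" using assms by simp
    then show ?thesis by (simp add: powr_realpow[symmetric] powr_powr)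
  qed
  also have "\<dots> = c powr (real M * e) * y powr (real M * e)" by (rule powr_mult)
  finally show ?thesis .
qed

lemma shell_sub_cube: "shell j \<subseteq> cube (Suc j)"
  unfolding shell_def cube_def by auto

lemma shell_p:
  fixes f :: "real^'m::finite \<Rightarrow> complex"
  assumes f: "f \<in> C_nu_alpha \<nu> \<alpha>" and a: "0 \<le> \<alpha>" and H0: "0 \<le> H"
    and H: "\<And>i t1 t2. cmod (Dpart (replicate \<nu> i) f t1 - Dpart (replicate \<nu> i) f t2) \<le> H * dist t1 t2 powr \<alpha>"
    and K: "finite K" and p: "1 \<le> p" "p \<le> 2"
  shows "(\<Sum>k\<in>K \<inter> shell j. cmod (fourier_coeff f k) powr p)
     \<le> 4 powr (real CARD('m) * (1 - p/2)) *
        (real CARD('m) * (4 * (real (Suc \<nu>)) powr (2*\<alpha>) * (pi/2) powr (2*(real \<nu> + \<alpha>)))) powr (p/2) *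
        H powr p * (2^j) powr (real CARD('m) * (1 - p/2) - p * (real \<nu> + \<alpha>))"
proof -
  define A where "A = K \<inter> shell j"
  define K1 where "K1 = 4 * (real (Suc \<nu>)) powr (2*\<alpha>) * (pi/2) powr (2*(real \<nu> + \<alpha>))"
  define y :: real where "y = 2^j"
  define m where "m = real CARD('m)"
  define q where "q = m * (1 - p/2)"
  have y: "y \<ge> 1" unfolding y_def by simp
  have K10: "K1 \<ge> 0" unfolding K1_def by simp
  have fA: "finite A" unfolding A_def using K by simp
  have cA: "card A \<le> (2 * 2^(Suc j)) ^ CARD('m)"
  proof -
    have "A \<subseteq> cube (Suc j)" unfolding A_def using shell_sub_cube by blast
    then show ?thesis using cube_finite_card[of "Suc j", where 'm='m] card_mono order_trans by metis
  qed
  have cA': "real (card A) \<le> (4 * y) ^ CARD('m)"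
  proof -
    have "real (card A) \<le> real ((2 * 2^(Suc j)) ^ CARD('m))" using cA by linarith
    then show ?thesis unfolding y_def by simp
  qed
  have j1: "(\<Sum>k\<in>A. cmod (fourier_coeff f k) powr p) \<le> real (card A) powr (1 - p/2) * (\<Sum>k\<in>A. (cmod (fourier_coeff f k))\<^sup>2) powr (p/2)"
    by (rule jensen[OF fA _ p]) simp
  have c1: "real (card A) powr (1 - p/2) \<le> 4 powr q * y powr q"
    unfolding q_def m_def using card_pow_powr[OF cA'] p y by simp
  have s2: "(\<Sum>k\<in>A. (cmod (fourier_coeff f k))\<^sup>2) \<le> m * (K1 * H\<^sup>2 * y powr (-(2*(real \<nu> + \<alpha>))))"
    unfolding m_def K1_def y_def A_def using shell_L2[OF f a H0 H, of A j] fA unfolding A_def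
    by (simp add: mult_ac)
  have c2: "(\<Sum>k\<in>A. (cmod (fourier_coeff f k))\<^sup>2) powr (p/2) \<le> (m * K1) powr (p/2) * H powr p * y powr (- p * (real \<nu> + \<alpha>))"
  proof -
    have "(\<Sum>k\<in>A. (cmod (fourier_coeff f k))\<^sup>2) powr (p/2) \<le> (m * (K1 * H\<^sup>2 * y powr (-(2*(real \<nu> + \<alpha>))))) powr (p/2)"
      using s2 p by (intro powr_mono2) (auto intro: sum_nonneg)
    also have "\<dots> = (m * K1) powr (p/2) * (H\<^sup>2) powr (p/2) * (y powr (-(2*(real \<nu> + \<alpha>)))) powr (p/2)"
      by (simp add: powr_mult mult_ac)
    also have "(H\<^sup>2) powr (p/2) = H powr p" by (rule sq_powr[OF H0])
    also have "(y powr (-(2*(real \<nu> + \<alpha>)))) powr (p/2) = y powr (- p * (real \<nu> + \<alpha>))"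
      unfolding powr_powr by (rule arg_cong[of _ _ "\<lambda>z. y powr z"]) (simp add: field_simps)
    finally show ?thesis .
  qed
  have "(\<Sum>k\<in>A. cmod (fourier_coeff f k) powr p) \<le> (4 powr q * y powr q) * ((m * K1) powr (p/2) * H powr p * y powr (- p * (real \<nu> + \<alpha>)))"
    using j1 c1 c2 by (meson mult_mono order_trans powr_ge_zero)
  also have "\<dots> = 4 powr q * (m * K1) powr (p/2) * H powr p * (y powr q * y powr (- p * (real \<nu> + \<alpha>)))"
    by (simp only: mult_ac)
  also have "y powr q * y powr (- p * (real \<nu> + \<alpha>)) = y powr (q - p * (real \<nu> + \<alpha>))"
    by (simp add: powr_add[symmetric])
  finally show ?thesis unfolding A_def q_def m_def K1_def y_def .
qed

lemma low_p:
  fixes f :: "real^'m::finite \<Rightarrow> complex"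
  assumes cf: "continuous_on UNIV f" and K: "finite K" and p: "1 \<le> p" "p \<le> 2"
  shows "(\<Sum>k\<in>K \<inter> cube J. cmod (fourier_coeff f k) powr p)
     \<le> 2 powr (real CARD('m) * (1 - p/2)) * (2^J) powr (real CARD('m) * (1 - p/2)) * L2_torus_norm f powr p"
proof -
  define A where "A = K \<inter> cube J"
  have fA: "finite A" unfolding A_def using K by simp
  have cA': "real (card A) \<le> (2 * 2^J) ^ CARD('m)"
  proof -
    have "A \<subseteq> cube J" unfolding A_def by blast
    then have "card A \<le> (2 * 2^J) ^ CARD('m)" using cube_finite_card[of J, where 'm='m] card_mono order_trans by metis
    then have "real (card A) \<le> real ((2 * 2^J) ^ CARD('m))" by linarith
    then show ?thesis by simp
  qed
  have j1: "(\<Sum>k\<in>A. cmod (fourier_coeff f k) powr p) \<le> real (card A) powr (1 - p/2) * (\<Sum>k\<in>A. (cmod (fourier_coeff f k))\<^sup>2) powr (p/2)"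
    by (rule jensen[OF fA _ p]) simp
  have c1: "real (card A) powr (1 - p/2) \<le> 2 powr (real CARD('m) * (1 - p/2)) * (2^J) powr (real CARD('m) * (1 - p/2))"
    using card_pow_powr[OF cA'] p by simp
  have "0 \<le> integral torus_box (\<lambda>t. (cmod (f t))\<^sup>2)"
    by (intro integral_nonneg integrable_box continuous_intros cf) auto
  then have F0: "0 \<le> L2_torus_norm f" unfolding L2_torus_norm_def powi_W using WW_pos[where 'm='m] by simp
  have c2: "(\<Sum>k\<in>A. (cmod (fourier_coeff f k))\<^sup>2) powr (p/2) \<le> L2_torus_norm f powr p"
  proof -
    have "(\<Sum>k\<in>A. (cmod (fourier_coeff f k))\<^sup>2) powr (p/2) \<le> ((L2_torus_norm f)\<^sup>2) powr (p/2)"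
      using coeff_L2_bound[OF cf fA] p by (intro powr_mono2) (auto intro: sum_nonneg)
    then show ?thesis using sq_powr[OF F0] by simp
  qed
  show ?thesis using j1 c1 c2 unfolding A_def[symmetric] by (meson mult_mono order_trans powr_ge_zero)
qed

lemma cube_mono: "n \<le> N \<Longrightarrow> cube n \<subseteq> cube N"
  unfolding cube_def by (auto intro: less_le_trans[OF _ power_increasing[of n N "2::int"]])

lemma in_some_cube: "\<exists>n. (k::int^'m::finite) \<in> cube n"
proof -
  define n where "n = nat (\<Sum>l\<in>UNIV. \<bar>k$l\<bar>)"
  have "\<bar>k$l\<bar> < 2^n" for l
  proof -
    have "\<bar>k$l\<bar> \<le> (\<Sum>l\<in>UNIV. \<bar>k$l\<bar>)" by (rule member_le_sum) auto
    also have "\<dots> = int n" unfolding n_def by (simp add: sum_nonneg)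
    also have "\<dots> < 2^n" by (metis of_nat_less_iff less_exp of_nat_numeral of_nat_power)
    finally show ?thesis .
  qed
  then show ?thesis unfolding cube_def by blast
qed

lemma finite_in_cube: "finite K \<Longrightarrow> \<exists>N. K \<subseteq> cube N \<and> J < N"
proof (induction K rule: finite_induct)
  case empty then show ?case by auto
next
  case (insert k K)
  then obtain N where N: "K \<subseteq> cube N" "J < N" by blast
  obtain n where n: "k \<in> cube n" using in_some_cube by blast
  show ?case using N n cube_mono[of N "max N n"] cube_mono[of n "max N n"]
    by (intro exI[of _ "max N n"]) auto
qed

lemma cover_shells:
  assumes kN: "k \<in> cube N" and kJ: "k \<notin> cube J" and JN: "J < N"
  shows "\<exists>j\<in>{J..<N}. k \<in> shell j"
proof -
  define j where "j = (LEAST j. k \<in> cube (Suc j))"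
  have ex: "k \<in> cube (Suc (N - 1))" using kN JN by simp
  have j1: "k \<in> cube (Suc j)" unfolding j_def by (rule LeastI[where P="\<lambda>j. k \<in> cube (Suc j)", OF ex])
  have j2: "j \<le> N - 1" unfolding j_def by (rule Least_le[where P="\<lambda>j. k \<in> cube (Suc j)", OF ex])
  obtain i where i: "2^J \<le> \<bar>k$i\<bar>" using kJ unfolding cube_def by (auto simp: not_less)
  have Jj: "J \<le> j"
  proof (rule ccontr)
    assume "\<not> J \<le> j"
    then have "Suc j \<le> J" by simp
    then have "(2::int)^(Suc j) \<le> 2^J" by (rule power_increasing) simp
    moreover have "\<bar>k$i\<bar> < 2^(Suc j)" using j1 unfolding cube_def by blast
    ultimately show False using i by simp
  qed
  have "\<exists>i. 2^j \<le> \<bar>k$i\<bar>"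
  proof (cases j)
    case 0
    have "(1::int) \<le> 2^J" by (rule one_le_power) simp
    then have "1 \<le> \<bar>k$i\<bar>" using i by linarith
    then show ?thesis using 0 by (intro exI[of _ i]) simp
  next
    case (Suc j')
    have "\<not> k \<in> cube (Suc j')" unfolding j_def using Suc by (metis j_def lessI not_less_Least)
    then show ?thesis unfolding cube_def using Suc by (auto simp: not_less)
  qed
  then have "k \<in> shell j" using j1 unfolding shell_def cube_def by blast
  moreover have "j \<in> {J..<N}" using Jj j2 JN by auto
  ultimately show ?thesis by blast
qed

lemma pow_powr_geom: "(2^j :: real) powr x = (2 powr x) ^ j"
  by (simp add: powr_realpow[symmetric] powr_powr mult.commute)

lemma total_bound:
  fixes f :: "real^'m::finite \<Rightarrow> complex"
  assumes f: "f \<in> C_nu_alpha \<nu> \<alpha>" and a: "0 \<le> \<alpha>" and H0: "0 \<le> H"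
    and H: "\<And>i t1 t2. cmod (Dpart (replicate \<nu> i) f t1 - Dpart (replicate \<nu> i) f t2) \<le> H * dist t1 t2 powr \<alpha>"
    and K: "finite K" and p: "1 \<le> p" "p \<le> 2"
    and r: "r = 2 powr (real CARD('m) * (1 - p/2) - p * (real \<nu> + \<alpha>))" "r < 1"
    and C2: "C2 = 4 powr (real CARD('m) * (1 - p/2)) *
        (real CARD('m) * (4 * (real (Suc \<nu>)) powr (2*\<alpha>) * (pi/2) powr (2*(real \<nu> + \<alpha>)))) powr (p/2)"
  shows "(\<Sum>k\<in>K. cmod (fourier_coeff f k) powr p)
     \<le> 2 powr (real CARD('m) * (1 - p/2)) * (2^J) powr (real CARD('m) * (1 - p/2)) * L2_torus_norm f powr p
       + C2 * H powr p * (r ^ J / (1 - r))"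
proof -
  define c where "c k = cmod (fourier_coeff f k) powr p" for k
  have c0: "0 \<le> c k" for k unfolding c_def by simp
  obtain N where N: "K \<subseteq> cube N" "J < N" using finite_in_cube[OF K] by blast
  have r0: "0 < r" using r by simp
  have "(\<Sum>k\<in>K. c k) = (\<Sum>k\<in>K \<inter> cube J. c k) + (\<Sum>k\<in>K - cube J. c k)"
    using K by (rule sum.Int_Diff)
  also have "(\<Sum>k\<in>K \<inter> cube J. c k) \<le> 2 powr (real CARD('m) * (1 - p/2)) * (2^J) powr (real CARD('m) * (1 - p/2)) * L2_torus_norm f powr p"
    unfolding c_def by (rule low_p[OF C_cont[OF f] K p])
  also have "(\<Sum>k\<in>K - cube J. c k) \<le> (\<Sum>j\<in>{J..<N}. \<Sum>k\<in>(K - cube J) \<inter> shell j. c k)"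
  proof (rule sum_cover)
    fix k assume "k \<in> K - cube J"
    then show "\<exists>j\<in>{J..<N}. k \<in> shell j" using cover_shells[OF _ _ N(2)] N(1) by blast
  qed (use K c0 in auto)
  also have "\<dots> \<le> (\<Sum>j\<in>{J..<N}. C2 * H powr p * r ^ j)"
  proof (rule sum_mono)
    fix j
    have "(\<Sum>k\<in>(K - cube J) \<inter> shell j. c k) \<le> (\<Sum>k\<in>K \<inter> shell j. c k)"
      using K c0 by (intro sum_mono2) auto
    also have "\<dots> \<le> C2 * H powr p * (2^j) powr (real CARD('m) * (1 - p/2) - p * (real \<nu> + \<alpha>))"
      unfolding c_def C2 by (rule shell_p[OF f a H0 H K p])
    also have "(2^j :: real) powr (real CARD('m) * (1 - p/2) - p * (real \<nu> + \<alpha>)) = r ^ j"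
      unfolding r(1) by (rule pow_powr_geom)
    finally show "(\<Sum>k\<in>(K - cube J) \<inter> shell j. c k) \<le> C2 * H powr p * r ^ j" .
  qed
  also have "\<dots> = C2 * H powr p * (\<Sum>j\<in>{J..<N}. r ^ j)" by (simp add: sum_distrib_left)
  also have "\<dots> \<le> C2 * H powr p * (r ^ J / (1 - r))"
    using geom_tail[OF r0 r(2), of "{J..<N}" J] C2 by (intro mult_left_mono) auto
  finally show ?thesis unfolding c_def by simp
qed

lemma exists_J:
  fixes R :: real assumes "1 \<le> R"
  shows "\<exists>J::nat. 2^J \<le> R \<and> R < 2 * 2^J"
proof -
  obtain n where n: "R < 2^n" using real_arch_pow[of 2 R] by auto
  have "(2::real)^n \<le> 2^(Suc n)" by (rule power_increasing) auto
  then have ex: "R < 2^(Suc n)" using n by linarith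
  define J where "J = (LEAST j. R < 2^(Suc j))"
  have J1: "R < 2^(Suc J)" unfolding J_def by (rule LeastI[where P="\<lambda>j. R < 2^(Suc j)", OF ex])
  have J2: "2^J \<le> R"
  proof (cases J)
    case 0 then show ?thesis using assms by simp
  next
    case (Suc j)
    have "\<not> R < 2^(Suc j)" unfolding J_def using Suc by (metis J_def lessI not_less_Least)
    then show ?thesis using Suc by simp
  qed
  show ?thesis using J1 J2 by auto
qed

lemma l1: fixes x :: real shows "x < 0 \<Longrightarrow> 2 powr x < 1"
  using powr_less_mono[of x 0 2] by simp

lemma l2: fixes B F x p :: real assumes "F > 0" shows "(B/F) powr x * F powr p = B powr x * F powr (p - x)"
proof -
  have "(B/F) powr x * F powr p = B powr x * (F powr p / F powr x)" by (simp add: powr_divide)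
  also have "F powr p / F powr x = F powr (p - x)" by (rule powr_diff[symmetric])
  finally show ?thesis .
qed

lemma l3: fixes R e :: real shows "(R/2) powr (-e) = 2 powr e * R powr (-e)"
proof -
  have "(R/2) powr (-e) = R powr (-e) / 2 powr (-e)" by (rule powr_divide)
  also have "1 / 2 powr (-e) = (2::real) powr e" by (simp add: powr_minus_divide)
  then have "R powr (-e) / 2 powr (-e) = 2 powr e * R powr (-e)" by (metis times_divide_eq_right mult.commute mult_1_right)
  finally show ?thesis .
qed

lemma alg1: fixes C X Y Z D :: real shows "C * X * (Y * Z / D) = C * Y / D * (X * Z)"
  by (simp add: divide_inverse mult_ac)

lemma l4: fixes B F x p :: real assumes "F > 0" "B > 0"
  shows "B powr p * (B/F) powr (-x) = B powr (p + -x) * F powr x"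
proof -
  have "(B/F) powr (-x) = B powr (-x) / F powr (-x)" by (rule powr_divide)
  then have "B powr p * (B/F) powr (-x) = B powr p * B powr (-x) * (1 / F powr (-x))"
    by (simp add: divide_inverse mult.assoc)
  also have "B powr p * B powr (-x) = B powr (p + -x)" by (rule powr_add[symmetric])
  also have "1 / F powr (-x) = F powr x" by (simp add: powr_minus_divide)
  finally show ?thesis .
qed

lemma final_alg:
  fixes B F H a q p e r C2 R :: real and J :: nat
  assumes F: "F > 0" and BF: "F \<le> B" and H: "0 \<le> H" "H \<le> B" and a: "a > 0" and q: "q \<ge> 0" and p: "p > 0"
    and e: "e = p * a - q" "e > 0" and r: "r = 2 powr (-e)" and C2: "C2 \<ge> 0"
    and R: "R = (B/F) powr (1/a)" and J: "2^J \<le> R" "R < 2 * 2^J"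
  shows "2 powr q * (2^J) powr q * F powr p + C2 * H powr p * (r ^ J / (1 - r))
     \<le> (2 powr q + C2 * 2 powr e / (1 - r)) * (B powr (q/a) * F powr (p - q/a))"
proof -
  define Y :: real where "Y = 2^J"
  define Z where "Z = B powr (q/a) * F powr (p - q/a)"
  have B: "B > 0" using F BF by simp
  have r1: "r < 1" "0 < r" unfolding r using e l1[of "-e"] by auto
  have R0: "R > 0" unfolding R using B F by simp
  have t1: "Y powr q \<le> (B/F) powr (q/a)"
  proof -
    have "Y powr q \<le> R powr q" using J q unfolding Y_def by (intro powr_mono2) auto
    also have "R powr q = (B/F) powr (q/a)" unfolding R powr_powr
      by (rule arg_cong[of _ _ "\<lambda>z. (B/F) powr z"]) simp
    finally show ?thesis .
  qed
  have t1': "2 powr q * Y powr q * F powr p \<le> 2 powr q * Z"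
  proof -
    have "2 powr q * Y powr q * F powr p = 2 powr q * (Y powr q * F powr p)" by (simp only: mult.assoc)
    also have "\<dots> \<le> 2 powr q * ((B/F) powr (q/a) * F powr p)"
      using t1 by (intro mult_left_mono mult_right_mono) auto
    also have "(B/F) powr (q/a) * F powr p = Z" unfolding Z_def by (rule l2[OF F])
    finally show ?thesis .
  qed
  have t2: "r ^ J \<le> 2 powr e * (B/F) powr (-(e/a))"
  proof -
    have "r ^ J = Y powr (-e)" unfolding Y_def r pow_powr_geom ..
    also have "\<dots> \<le> (R/2) powr (-e)" using J e R0 unfolding Y_def by (intro powr_mono2') auto
    also have "(R/2) powr (-e) = 2 powr e * R powr (-e)" by (rule l3)
    also have "R powr (-e) = (B/F) powr (-(e/a))" unfolding R powr_powr
      by (rule arg_cong[of _ _ "\<lambda>z. (B/F) powr z"]) simp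
    finally show ?thesis .
  qed
  have t2': "H powr p \<le> B powr p" using H p by (intro powr_mono2) auto
  have t4: "B powr p * (B/F) powr (-(e/a)) = Z"
  proof -
    have ex1: "p + -(e/a) = q/a" using a unfolding e by (simp add: field_simps)
    have ex2: "e/a = p - q/a" using a unfolding e by (simp add: field_simps)
    have "B powr p * (B/F) powr (-(e/a)) = B powr (p + -(e/a)) * F powr (e/a)" by (rule l4[OF F B])
    also have "\<dots> = Z" by (subst ex1) (simp only: Z_def ex2)
    finally show ?thesis .
  qed
  have t3: "C2 * H powr p * (r ^ J / (1 - r)) \<le> C2 * 2 powr e / (1 - r) * Z"
  proof -
    have "C2 * H powr p * (r ^ J / (1 - r)) \<le> C2 * B powr p * ((2 powr e * (B/F) powr (-(e/a))) / (1 - r))"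
      using t2 t2' r1 C2 by (intro mult_mono divide_right_mono) auto
    also have "\<dots> = C2 * 2 powr e / (1 - r) * (B powr p * (B/F) powr (-(e/a)))" by (rule alg1)
    finally show ?thesis unfolding t4 .
  qed
  have "2 powr q * (2^J) powr q * F powr p + C2 * H powr p * (r ^ J / (1 - r)) \<le> 2 powr q * Z + C2 * 2 powr e / (1 - r) * Z"
    using add_mono[OF t1' t3] unfolding Y_def .
  also have "\<dots> = (2 powr q + C2 * 2 powr e / (1 - r)) * Z" by (simp only: distrib_right)
  finally show ?thesis unfolding Z_def .
qed

theorem lemma2:
  fixes p \<alpha> :: real and \<nu> :: nat
  assumes "1 \<le> p" "p < 2" "0 \<le> \<alpha>" "\<alpha> \<le> 1"
    and "real \<nu> + \<alpha> > real CARD('m::finite) * (1/p - 1/2)"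
  shows "\<exists>c>0. \<forall>f \<in> (C_nu_alpha \<nu> \<alpha> :: (real^'m \<Rightarrow> complex) set).
           (\<lambda>k. norm (fourier_coeff f k) powr p) summable_on UNIV \<and>
           Ap_norm p f \<le> c * C_nu_alpha_norm \<nu> \<alpha> f powr
                 (real CARD('m) * (1/p - 1/2) / (real \<nu> + \<alpha>))
             * L2_torus_norm f powr
                 (1 - real CARD('m) * (1/p - 1/2) / (real \<nu> + \<alpha>))"
proof -
  have p1: "1 \<le> p" "p \<le> 2" and p0: "p > 0" using assms by auto
  have a0: "0 \<le> \<alpha>" by (rule assms(3))
  define m where "m = real CARD('m)"
  define a where "a = real \<nu> + \<alpha>"
  define q where "q = m * (1 - p/2)"
  define e where "e = p * a - q"
  define r where "r = (2::real) powr (-e)"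
  define C2 where "C2 = 4 powr (real CARD('m) * (1 - p/2)) *
        (real CARD('m) * (4 * (real (Suc \<nu>)) powr (2*\<alpha>) * (pi/2) powr (2*(real \<nu> + \<alpha>)))) powr (p/2)"
  define C4 where "C4 = 2 powr q + C2 * 2 powr e / (1 - r)"
  define \<tau> where "\<tau> = real CARD('m) * (1/p - 1/2) / (real \<nu> + \<alpha>)"
  have m0: "m > 0" unfolding m_def by simp
  have hp: "0 < 1/p - 1/2" using assms(2) p0 by (simp add: field_simps)
  have a_gt: "a > m * (1/p - 1/2)" using assms(5) unfolding a_def m_def .
  have a: "a > 0" using a_gt m0 hp by (smt (verit) mult_pos_pos)
  have qeq: "q = p * (m * (1/p - 1/2))" unfolding q_def using p0 by (simp add: field_simps)
  have q0: "q \<ge> 0" unfolding q_def using p1 m0 by simp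
  have e0: "e > 0" unfolding e_def qeq using a_gt p0 by (simp add: right_diff_distrib[symmetric])
  have r1: "r < 1" "0 < r" unfolding r_def using e0 l1[of "-e"] by auto
  have rr: "r = 2 powr (real CARD('m) * (1 - p/2) - p * (real \<nu> + \<alpha>))"
    unfolding r_def e_def q_def m_def a_def by (simp add: algebra_simps)
  have C20: "C2 \<ge> 0" unfolding C2_def by simp
  have C4: "C4 > 0" unfolding C4_def using C20 r1
    by (intro add_pos_nonneg) (auto intro!: divide_nonneg_pos)
  have tau1: "q / a / p = \<tau>"
  proof -
    have "q / a / p = m * (1/p - 1/2) / a" unfolding qeq using p0 a by (simp add: field_simps)
    then show ?thesis unfolding \<tau>_def m_def a_def .
  qed
  have tau2: "(p - q / a) / p = 1 - \<tau>"
  proof -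
    have "(p - q / a) / p = 1 - q / a / p" using p0 by (simp add: diff_divide_distrib)
    then show ?thesis using tau1 by simp
  qed
  show ?thesis
  proof (intro exI[of _ "C4 powr (1/p)"] conjI ballI)
    show "C4 powr (1/p) > 0" using C4 by simp
    fix f :: "real^'m \<Rightarrow> complex"
    assume f: "f \<in> C_nu_alpha \<nu> \<alpha>"
    define B where "B = C_nu_alpha_norm \<nu> \<alpha> f"
    define F where "F = L2_torus_norm f"
    define H where "H = Max ((\<lambda>xs. SUP \<delta>\<in>{0<..}. \<delta> powr (-\<alpha>) * modulus_cont (Dpart xs f) \<delta>) ` {xs::'m list. length xs = \<nu>})"
    note nf = norm_facts[OF f a0, folded H_def B_def F_def]
    have cf: "continuous_on UNIV f" by (rule C_cont[OF f])
    have F0: "0 \<le> F"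
    proof -
      have "0 \<le> integral torus_box (\<lambda>t. (cmod (f t))\<^sup>2)"
        by (intro integral_nonneg integrable_box continuous_intros cf) auto
      then show ?thesis unfolding F_def L2_torus_norm_def powi_W using WW_pos[where 'm='m] by simp
    qed
    have goal: "(\<lambda>k. norm (fourier_coeff f k) powr p) summable_on UNIV \<and> Ap_norm p f \<le> C4 powr (1/p) * B powr \<tau> * F powr (1 - \<tau>)"
    proof (cases "F = 0")
      case True
      have z: "cmod (fourier_coeff f k) = 0" for k
      proof -
        have "(\<Sum>k\<in>{k}. (cmod (fourier_coeff f k))\<^sup>2) \<le> F\<^sup>2" unfolding F_def by (rule coeff_L2_bound[OF cf]) simp
        then show ?thesis using True by simp
      qed
      have "(\<lambda>k. norm (fourier_coeff f k) powr p) = (\<lambda>_. 0)" using z by simp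
      then show ?thesis unfolding Ap_norm_def using True by simp
    next
      case False
      then have F: "F > 0" using F0 by simp
      define R where "R = (B/F) powr (1/a)"
      have BF1: "1 \<le> B / F" using nf(4) F by simp
      have R1: "1 \<le> R" unfolding R_def using BF1 a by (intro ge_one_powr_ge_zero) auto
      obtain J where J: "2^J \<le> R" "R < 2 * 2^J" using exists_J[OF R1] by blast
      define Z where "Z = B powr (q/a) * F powr (p - q/a)"
      have bnd: "(\<Sum>k\<in>K. cmod (fourier_coeff f k) powr p) \<le> C4 * Z" if K: "finite K" for K
      proof -
        have "(\<Sum>k\<in>K. cmod (fourier_coeff f k) powr p)
           \<le> 2 powr (real CARD('m) * (1 - p/2)) * (2^J) powr (real CARD('m) * (1 - p/2)) * F powr p
             + C2 * H powr p * (r ^ J / (1 - r))"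
          unfolding F_def by (rule total_bound[OF f a0 nf(2) nf(1) K p1 rr r1(1) C2_def])
        also have "\<dots> \<le> C4 * Z" unfolding C4_def Z_def q_def[symmetric] m_def[symmetric]
          by (rule final_alg[OF F nf(4) nf(2) nf(3) a q0 p0 e_def e0 r_def C20 R_def J])
        finally show ?thesis .
      qed
      have nn: "0 \<le> norm (fourier_coeff f k) powr p" for k by simp
      have sm: "(\<lambda>k. norm (fourier_coeff f k) powr p) summable_on UNIV"
        using bnd by (intro nonneg_bdd_above_summable_on bdd_aboveI2[of _ _ "C4 * Z"]) auto
      have inf: "(\<Sum>\<^sub>\<infinity>k\<in>UNIV. norm (fourier_coeff f k) powr p) \<le> C4 * Z"
        using bnd by (intro infsum_le_finite_sums[OF sm]) auto
      have inf0: "0 \<le> (\<Sum>\<^sub>\<infinity>k\<in>UNIV. norm (fourier_coeff f k) powr p)" by (intro infsum_nonneg) simp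
      have "Ap_norm p f \<le> (C4 * Z) powr (1/p)" unfolding Ap_norm_def
        using inf inf0 p0 by (intro powr_mono2) auto
      also have "(C4 * Z) powr (1/p) = C4 powr (1/p) * B powr (q/a/p) * F powr ((p - q/a)/p)"
        unfolding Z_def by (simp add: powr_mult powr_powr divide_inverse mult_ac)
      also have "\<dots> = C4 powr (1/p) * B powr \<tau> * F powr (1 - \<tau>)" unfolding tau1 tau2 ..
      finally show ?thesis using sm by simp
    qed
    then show "(\<lambda>k. norm (fourier_coeff f k) powr p) summable_on UNIV" by simp
    from goal show "Ap_norm p f \<le> C4 powr (1/p) * C_nu_alpha_norm \<nu> \<alpha> f powr (real CARD('m) * (1/p - 1/2) / (real \<nu> + \<alpha>))
             * L2_torus_norm f powr (1 - real CARD('m) * (1/p - 1/2) / (real \<nu> + \<alpha>))"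
      unfolding B_def F_def \<tau>_def by simp
  qed
qed

end
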